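(* Let $m=2$. For generic $c\in\mathbb{C}^n$, \[\mathrm{rank}_p(\mathrm{Horn}(\mathcal{B},c))=\sum\nu_{ij},\] where the sum runs over unordered pairs $\{i,j\}$ of rows $b_i,b_j$ of $\mathcal{B}$ that are linearly independent and lie in the interiors of opposite quadrants of $\mathbb{Z}^2$.
   Context: $\mathcal{B}=(b_{ji})\in\mathbb{Z}^{n\times 2}$ ($n>2$) has rank 2, rows $b_j$ summing to zero. $\mathrm{Horn}(\mathcal{B},c)=D_2\langle H_1,H_2\rangle$, $H_i=Q_i-y_iP_i$, $P_i=\prod_{j:b_{ji}<0}\prod_{l=0}^{|b_{ji}|-1}(b_j\cdot\theta_y+c_j-l)$, $Q_i=\prod_{j:b_{ji}>0}\prod_{l=0}^{b_{ji}-1}(b_j\cdot\theta_y+c_j-l)$, $b_j\cdot\theta_y=b_{j1}y_1\partial_{y_1}+b_{j2}y_2\partial_{y_2}$. $\mathrm{rank}_p$ is the dimension of the space of Puiseux polynomial solutions (finite linear combinations of monomials with complex exponents). $\nu_{ij}=\min(|b_{i1}b_{j2}|,|b_{j1}b_{i2}|)$ when $b_i,b_j$ lie in the interiors of opposite quadrants. Generic: outside an exceptional measure-zero set. *)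

theory Defs
  imports "HOL-Analysis.Analysis" "HOL-Library.Function_Algebras"
begin

text \<open>Rows of the n x 2 integer matrix B are indexed by a finite type 'n;
  row j is the pair (b_j1, b_j2). Column index i ranges over {1,2}.\<close>

definition entry :: "int \<times> int \<Rightarrow> nat \<Rightarrow> int" where
  "entry b i = (if i = 1 then fst b else snd b)"

text \<open>A Puiseux polynomial in y1,y2 is represented by its coefficient function
  a : C^2 -> C (exponent vector alpha = (alpha1, alpha2) maps to the coefficient
  of y^alpha), with finite support.\<close>

type_synonym puiseux = "complex \<times> complex \<Rightarrow> complex"

definition is_puiseux_poly :: "puiseux \<Rightarrow> bool" where
  "is_puiseux_poly a \<longleftrightarrow> finite {\<alpha>. a \<alpha> \<noteq> 0}"

text \<open>Euler operators: theta_{y_k} y^alpha = alpha_k y^alpha, so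
  (b . theta_y) y^alpha = (b . alpha) y^alpha.\<close>

definition bdot :: "int \<times> int \<Rightarrow> complex \<times> complex \<Rightarrow> complex" where
  "bdot b \<alpha> = of_int (fst b) * fst \<alpha> + of_int (snd b) * snd \<alpha>"

definition unitexp :: "nat \<Rightarrow> complex \<times> complex" where
  "unitexp i = (if i = 1 then (1, 0) else (0, 1))"

text \<open>Symbols of P_i and Q_i: P_i y^alpha = Psym B c i alpha * y^alpha etc.\<close>

definition Psym :: "('n \<Rightarrow> int \<times> int) \<Rightarrow> (complex ^ 'n) \<Rightarrow> nat \<Rightarrow> complex \<times> complex \<Rightarrow> complex" where
  "Psym B c i \<alpha> = (\<Prod>j\<in>{j. entry (B j) i < 0}.
      \<Prod>l<nat \<bar>entry (B j) i\<bar>. (bdot (B j) \<alpha> + c $ j - of_nat l))"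

definition Qsym :: "('n \<Rightarrow> int \<times> int) \<Rightarrow> (complex ^ 'n) \<Rightarrow> nat \<Rightarrow> complex \<times> complex \<Rightarrow> complex" where
  "Qsym B c i \<alpha> = (\<Prod>j\<in>{j. entry (B j) i > 0}.
      \<Prod>l<nat (entry (B j) i). (bdot (B j) \<alpha> + c $ j - of_nat l))"

text \<open>Action of H_i = Q_i - y_i P_i on a Puiseux polynomial, coefficientwise:
  coefficient of y^beta in H_i(f) is Q_i(beta) a(beta) - P_i(beta - e_i) a(beta - e_i).\<close>

definition Hop :: "('n \<Rightarrow> int \<times> int) \<Rightarrow> (complex ^ 'n) \<Rightarrow> nat \<Rightarrow> puiseux \<Rightarrow> puiseux" where
  "Hop B c i a = (\<lambda>\<beta>. Qsym B c i \<beta> * a \<beta> - Psym B c i (\<beta> - unitexp i) * a (\<beta> - unitexp i))"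

text \<open>Puiseux polynomial solutions of Horn(B,c) = D_2<H_1,H_2>: those annihilated by
  the left ideal, i.e. by both generators.\<close>

definition horn_puiseux_solutions :: "('n \<Rightarrow> int \<times> int) \<Rightarrow> (complex ^ 'n) \<Rightarrow> puiseux set" where
  "horn_puiseux_solutions B c =
     {a. is_puiseux_poly a \<and> Hop B c 1 a = 0 \<and> Hop B c 2 a = 0}"

definition cscale :: "complex \<Rightarrow> puiseux \<Rightarrow> puiseux" where
  "cscale z a = (\<lambda>\<alpha>. z * a \<alpha>)"

text \<open>rank_p: the complex dimension of the solution space (asserted finite separately).\<close>

definition rank_p :: "('n \<Rightarrow> int \<times> int) \<Rightarrow> (complex ^ 'n) \<Rightarrow> nat" where
  "rank_p B c = vector_space.dim cscale (horn_puiseux_solutions B c)"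

definition rank_p_finite :: "('n \<Rightarrow> int \<times> int) \<Rightarrow> (complex ^ 'n) \<Rightarrow> bool" where
  "rank_p_finite B c \<longleftrightarrow>
     (\<exists>S. finite S \<and> module.span cscale S = horn_puiseux_solutions B c)"

definition det2 :: "int \<times> int \<Rightarrow> int \<times> int \<Rightarrow> int" where
  "det2 b b' = fst b * snd b' - snd b * fst b'"

definition opposite_open_quadrants :: "int \<times> int \<Rightarrow> int \<times> int \<Rightarrow> bool" where
  "opposite_open_quadrants b b' \<longleftrightarrow>
     fst b \<noteq> 0 \<and> snd b \<noteq> 0 \<and>
     sgn (fst b') = - sgn (fst b) \<and> sgn (snd b') = - sgn (snd b)"

definition nu :: "int \<times> int \<Rightarrow> int \<times> int \<Rightarrow> nat" where
  "nu b b' = min (nat \<bar>fst b * snd b'\<bar>) (nat \<bar>fst b' * snd b\<bar>)"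

end

theory Submission
  imports Defs
begin

definition bad_set :: "(complex ^ 'n::finite) set" where
  "bad_set = (\<Union>\<alpha>\<in>(UNIV::('n \<Rightarrow> int) set) - {0}. \<Union>q\<in>(UNIV::int set).
      {c. (\<Sum>l\<in>UNIV. of_int (\<alpha> l) * c$l) = of_int q})"

lemma bad_piece_negligible:
  fixes \<alpha> :: "'n::finite \<Rightarrow> int" and q :: int
  assumes "\<alpha> \<noteq> 0"
  shows "negligible {c :: complex ^ 'n. (\<Sum>l\<in>UNIV. of_int (\<alpha> l) * c$l) = (of_int q :: complex)}"
proof -
    obtain l0 where l0: "\<alpha> l0 \<noteq> 0" using assms by (auto simp: fun_eq_iff)
    define a :: "complex ^ 'n" where "a = (\<chi> l. of_int (\<alpha> l))"
    have a0: "a \<noteq> 0" using l0 by (auto simp: a_def vec_eq_iff)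
    have "{c. (\<Sum>l\<in>UNIV. of_int (\<alpha> l) * c$l) = (of_int q :: complex)} \<subseteq> {x. a \<bullet> x = of_int q}"
    proof clarsimp
      fix c :: "complex ^ 'n"
      assume h: "(\<Sum>l\<in>UNIV. of_int (\<alpha> l) * c$l) = (of_int q :: complex)"
      have "a \<bullet> c = Re (\<Sum>l\<in>UNIV. of_int (\<alpha> l) * c$l)"
        by (simp add: a_def inner_vec_def inner_complex_def)
      then show "a \<bullet> c = of_int q" using h by simp
    qed
    then show ?thesis
      using negligible_hyperplane[of a "of_int q"] a0 negligible_subset by blast
qed

lemma bad_set_null: "(bad_set :: (complex ^ 'n::finite) set) \<in> null_sets lebesgue"
proof -
  have "negligible (bad_set :: (complex ^ 'n::finite) set)"
    unfolding bad_set_def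
    by (intro negligible_countable_Union countable_image countable_UN) (auto intro: bad_piece_negligible)
  then show ?thesis by (simp add: negligible_iff_null_sets)
qed


definition tt :: "('n \<Rightarrow> int \<times> int) \<Rightarrow> complex ^ 'n \<Rightarrow> 'n \<Rightarrow> complex \<times> complex \<Rightarrow> complex" where
  "tt B c l \<beta> = bdot (B l) \<beta> + c $ l"

definition ff :: "complex \<Rightarrow> nat \<Rightarrow> complex" where
  "ff x n = (\<Prod>m<n. x - of_nat m)"

lemma bdot_add: "bdot b (x + y) = bdot b x + bdot b y"
  by (simp add: bdot_def algebra_simps)

lemma bdot_diff: "bdot b (x - y) = bdot b x - bdot b y"
  by (simp add: bdot_def algebra_simps)

lemma bdot_unitexp: "bdot b (unitexp k) = of_int (entry b k)"
  by (simp add: bdot_def unitexp_def entry_def)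

lemma tt_add: "tt B c l (\<beta> + x) = tt B c l \<beta> + bdot (B l) x"
  by (simp add: tt_def bdot_add)

lemma ff_zero_iff: "ff x n = 0 \<longleftrightarrow> (\<exists>m<n. x = of_nat m)"
  by (auto simp: ff_def)

lemma Qsym_ff: "Qsym B c k \<beta> = (\<Prod>l\<in>{l. entry (B l) k > 0}. ff (tt B c l \<beta>) (nat (entry (B l) k)))"
  by (simp add: Qsym_def ff_def tt_def)

lemma Psym_ff: "Psym B c k \<beta> = (\<Prod>l\<in>{l. entry (B l) k < 0}. ff (tt B c l \<beta>) (nat \<bar>entry (B l) k\<bar>))"
  by (simp add: Psym_def ff_def tt_def)

lemma Qsym_zero_iff:
  fixes B :: "'n::finite \<Rightarrow> int \<times> int"
  shows "Qsym B c k \<beta> = 0 \<longleftrightarrow> (\<exists>l. entry (B l) k > 0 \<and> (\<exists>m < nat (entry (B l) k). tt B c l \<beta> = of_nat m))"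
  unfolding Qsym_ff by (subst prod_zero_iff) (auto simp: ff_zero_iff)

lemma Psym_zero_iff:
  fixes B :: "'n::finite \<Rightarrow> int \<times> int"
  shows "Psym B c k \<beta> = 0 \<longleftrightarrow> (\<exists>l. entry (B l) k < 0 \<and> (\<exists>m < nat \<bar>entry (B l) k\<bar>. tt B c l \<beta> = of_nat m))"
  unfolding Psym_ff by (subst prod_zero_iff) (auto simp: ff_zero_iff)

locale gen =
  fixes B :: "'r::{finite,linorder} \<Rightarrow> int \<times> int" and c :: "complex ^ ('r::{finite,linorder})"
  assumes gen: "\<And>(\<alpha>::'r \<Rightarrow> int) (q::int). \<alpha> \<noteq> 0 \<Longrightarrow> (\<Sum>l\<in>UNIV. of_int (\<alpha> l) * c$l) \<noteq> of_int q"
begin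

abbreviation "t \<equiv> tt B c"

lemma rel_false:
  fixes \<alpha> :: "'r \<Rightarrow> int"
  assumes a0: "\<alpha> \<noteq> 0" and s1: "(\<Sum>l\<in>UNIV. \<alpha> l * fst (B l)) = 0" and s2: "(\<Sum>l\<in>UNIV. \<alpha> l * snd (B l)) = 0"
    and ints: "\<And>l. \<alpha> l \<noteq> 0 \<Longrightarrow> t l \<beta> \<in> \<int>"
  shows False
proof -
  have "(\<Sum>l\<in>UNIV. of_int (\<alpha> l) * t l \<beta>) =
      (\<Sum>l\<in>UNIV. of_int (\<alpha> l) * c$l) + of_int (\<Sum>l\<in>UNIV. \<alpha> l * fst (B l)) * fst \<beta>
        + of_int (\<Sum>l\<in>UNIV. \<alpha> l * snd (B l)) * snd \<beta>"
    by (simp add: tt_def bdot_def algebra_simps sum.distrib sum_distrib_left sum_distrib_right)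
  also have "\<dots> = (\<Sum>l\<in>UNIV. of_int (\<alpha> l) * c$l)" using s1 s2 by simp
  finally have eq: "(\<Sum>l\<in>UNIV. of_int (\<alpha> l) * c$l) = (\<Sum>l\<in>UNIV. of_int (\<alpha> l) * t l \<beta>)" by simp
  have "(\<Sum>l\<in>UNIV. of_int (\<alpha> l) * t l \<beta>) \<in> \<int>"
  proof (intro Ints_sum)
    fix l show "of_int (\<alpha> l) * t l \<beta> \<in> \<int>"
      using ints[of l] by (cases "\<alpha> l = 0") auto
  qed
  then obtain q where "(\<Sum>l\<in>UNIV. of_int (\<alpha> l) * c$l) = of_int q" using eq by (auto elim: Ints_cases)
  with gen[OF a0] show False by blast
qed

lemma two_rows:
  assumes lk: "l \<noteq> k" and il: "t l \<beta> \<in> \<int>" and ik: "t k \<beta> \<in> \<int>"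
  shows "det2 (B l) (B k) \<noteq> 0"
proof
  assume d: "det2 (B l) (B k) = 0"
  obtain x1 x2 y1 y2 where bl: "B l = (x1, x2)" and bk: "B k = (y1, y2)" by (cases "B l", cases "B k") auto
  have d': "x1 * y2 = x2 * y1" using d by (simp add: det2_def bl bk)
  obtain A C :: int where AC: "A * x1 + C * y1 = 0" "A * x2 + C * y2 = 0" "A \<noteq> 0 \<or> C \<noteq> 0"
  proof (cases "x1 = 0 \<and> x2 = 0")
    case True then show ?thesis using that[of 1 0] by simp
  next
    case False
    show ?thesis
    proof (cases "x1 = 0")
      case True
      then have "x2 \<noteq> 0" using False by simp
      then show ?thesis using that[of y2 "- x2"] d' True by (auto simp: algebra_simps)
    next
      case False
      then show ?thesis using that[of y1 "- x1"] d' by (auto simp: algebra_simps)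
    qed
  qed
  define \<alpha> where "\<alpha> = (\<lambda>m. if m = l then A else if m = k then C else 0)"
  have "\<alpha> \<noteq> 0" using AC(3) lk by (auto simp: \<alpha>_def fun_eq_iff)
  moreover have "(\<Sum>m\<in>UNIV. \<alpha> m * fst (B m)) = 0"
  proof -
    have "(\<Sum>m\<in>UNIV. \<alpha> m * fst (B m)) = (\<Sum>m\<in>{l,k}. \<alpha> m * fst (B m))"
      by (rule sum.mono_neutral_right) (auto simp: \<alpha>_def)
    also have "\<dots> = 0" using lk AC by (simp add: \<alpha>_def bl bk)
    finally show ?thesis .
  qed
  moreover have "(\<Sum>m\<in>UNIV. \<alpha> m * snd (B m)) = 0"
  proof -
    have "(\<Sum>m\<in>UNIV. \<alpha> m * snd (B m)) = (\<Sum>m\<in>{l,k}. \<alpha> m * snd (B m))"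
      by (rule sum.mono_neutral_right) (auto simp: \<alpha>_def)
    also have "\<dots> = 0" using lk AC by (simp add: \<alpha>_def bl bk)
    finally show ?thesis .
  qed
  moreover have "\<And>m. \<alpha> m \<noteq> 0 \<Longrightarrow> t m \<beta> \<in> \<int>"
    using il ik by (auto simp: \<alpha>_def split: if_splits)
  ultimately show False by (rule rel_false)
qed

lemma three_rows:
  assumes d: "l \<noteq> k" "l \<noteq> m" "k \<noteq> m" and il: "t l \<beta> \<in> \<int>" and ik: "t k \<beta> \<in> \<int>" and im: "t m \<beta> \<in> \<int>"
  shows False
proof -
  have dlk: "det2 (B l) (B k) \<noteq> 0" using two_rows d il ik by blast
  define \<alpha> where "\<alpha> = (\<lambda>x. if x = l then det2 (B k) (B m) else if x = k then det2 (B m) (B l)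
        else if x = m then det2 (B l) (B k) else 0)"
  have "\<alpha> \<noteq> 0" using dlk d by (auto simp: \<alpha>_def fun_eq_iff)
  moreover have "(\<Sum>x\<in>UNIV. \<alpha> x * fst (B x)) = 0"
  proof -
    have "(\<Sum>x\<in>UNIV. \<alpha> x * fst (B x)) = (\<Sum>x\<in>{l,k,m}. \<alpha> x * fst (B x))"
      by (rule sum.mono_neutral_right) (auto simp: \<alpha>_def)
    also have "\<dots> = 0" using d by (simp add: \<alpha>_def det2_def algebra_simps)
    finally show ?thesis .
  qed
  moreover have "(\<Sum>x\<in>UNIV. \<alpha> x * snd (B x)) = 0"
  proof -
    have "(\<Sum>x\<in>UNIV. \<alpha> x * snd (B x)) = (\<Sum>x\<in>{l,k,m}. \<alpha> x * snd (B x))"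
      by (rule sum.mono_neutral_right) (auto simp: \<alpha>_def)
    also have "\<dots> = 0" using d by (simp add: \<alpha>_def det2_def algebra_simps)
    finally show ?thesis .
  qed
  moreover have "\<And>x. \<alpha> x \<noteq> 0 \<Longrightarrow> t x \<beta> \<in> \<int>"
    using il ik im by (auto simp: \<alpha>_def split: if_splits)
  ultimately show False by (rule rel_false)
qed

end


definition ofz :: "int \<times> int \<Rightarrow> complex \<times> complex" where
  "ofz x = (of_int (fst x), of_int (snd x))"

lemma ofz_diff1: "ofz (x - (1,0)) = ofz x - unitexp 1"
  by (simp add: ofz_def unitexp_def)
lemma ofz_diff2: "ofz (x - (0,1)) = ofz x - unitexp 2"
  by (simp add: ofz_def unitexp_def)
lemma ofz_add1: "ofz (x + (1,0)) = ofz x + unitexp 1"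
  by (simp add: ofz_def unitexp_def)
lemma ofz_add2: "ofz (x + (0,1)) = ofz x + unitexp 2"
  by (simp add: ofz_def unitexp_def)

lemma inj_ofz_shift: "inj (\<lambda>x. \<beta> + ofz x)"
  by (auto simp: inj_def ofz_def prod_eq_iff)

lemma lex_min_exists:
  fixes X :: "(int \<times> int) set"
  assumes "finite X" "X \<noteq> {}"
  shows "\<exists>x0\<in>X. x0 - (1,0) \<notin> X \<and> x0 - (0,1) \<notin> X"
proof -
  define m1 where "m1 = Min (fst ` X)"
  define X1 where "X1 = {x\<in>X. fst x = m1}"
  have m1X: "m1 \<in> fst ` X" using assms by (simp add: m1_def)
  have X1ne: "X1 \<noteq> {}" using m1X by (auto simp: X1_def)
  have fX1: "finite X1" using assms by (simp add: X1_def)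
  define m2 where "m2 = Min (snd ` X1)"
  have "m2 \<in> snd ` X1" using X1ne fX1 by (simp add: m2_def)
  then obtain x0 where x0: "x0 \<in> X1" "snd x0 = m2" by auto
  have "x0 - (1,0) \<notin> X"
  proof
    assume "x0 - (1,0) \<in> X"
    then have "m1 \<le> fst x0 - 1" using assms unfolding m1_def by (metis Min_le finite_imageI fst_diff fst_conv image_eqI)
    then show False using x0 by (simp add: X1_def)
  qed
  moreover have "x0 - (0,1) \<notin> X"
  proof
    assume "x0 - (0,1) \<in> X"
    then have "x0 - (0,1) \<in> X1" using x0 by (simp add: X1_def)
    then have "m2 \<le> snd x0 - 1" using fX1 unfolding m2_def by (metis Min_le finite_imageI snd_diff snd_conv image_eqI)
    then show False using x0 by simp
  qed
  ultimately show ?thesis using x0 by (auto simp: X1_def)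
qed

lemma lex_max_exists:
  fixes X :: "(int \<times> int) set"
  assumes "finite X" "X \<noteq> {}"
  shows "\<exists>x1\<in>X. x1 + (1,0) \<notin> X \<and> x1 + (0,1) \<notin> X"
proof -
  have "finite (uminus ` X)" "uminus ` X \<noteq> {}" using assms by auto
  then obtain y where y: "y \<in> uminus ` X" "y - (1,0) \<notin> uminus ` X" "y - (0,1) \<notin> uminus ` X"
    using lex_min_exists by blast
  have "- y \<in> X" using y(1) by auto
  moreover have "- y + (1,0) \<notin> X"
  proof
    assume "- y + (1,0) \<in> X"
    then have "- (- y + (1,0)) \<in> uminus ` X" by blast
    then show False using y(2) by (simp add: algebra_simps)
  qed
  moreover have "- y + (0,1) \<notin> X"
  proof
    assume "- y + (0,1) \<in> X"
    then have "- (- y + (0,1)) \<in> uminus ` X" by blast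
    then show False using y(3) by (simp add: algebra_simps)
  qed
  ultimately show ?thesis by blast
qed

context gen
begin

definition sol :: "puiseux \<Rightarrow> bool" where
  "sol a \<longleftrightarrow> a \<in> horn_puiseux_solutions B c"

lemma sol_eqn:
  assumes "sol a" and that: "k = 1 \<or> k = 2"
  shows "Qsym B c k \<beta> * a \<beta> = Psym B c k (\<beta> - unitexp k) * a (\<beta> - unitexp k)"
proof -
  have "Hop B c k a = 0" using assms that by (auto simp: sol_def horn_puiseux_solutions_def)
  then have "Hop B c k a \<beta> = 0" by simp
  then show ?thesis by (simp add: Hop_def)
qed

lemma sol_finite: "sol a \<Longrightarrow> finite {\<alpha>. a \<alpha> \<noteq> 0}"
  by (simp add: sol_def horn_puiseux_solutions_def is_puiseux_poly_def)

lemma t_shift_Ints: "t l (\<beta> + ofz x) \<in> \<int> \<longleftrightarrow> t l \<beta> \<in> \<int>"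
proof -
  have "t l (\<beta> + ofz x) = t l \<beta> + of_int (fst (B l) * fst x + snd (B l) * snd x)"
    by (simp add: tt_add bdot_def ofz_def)
  then show ?thesis
    by (metis Ints_add Ints_diff Ints_of_int add_diff_cancel_right')
qed

lemma Q_zero_row: "Qsym B c k \<gamma> = 0 \<Longrightarrow> \<exists>l. entry (B l) k > 0 \<and> t l \<gamma> \<in> \<int>"
  by (auto simp: Qsym_zero_iff)

lemma P_zero_row: "Psym B c k \<gamma> = 0 \<Longrightarrow> \<exists>l. entry (B l) k < 0 \<and> t l \<gamma> \<in> \<int>"
  by (auto simp: Psym_zero_iff)

lemma four_rows:
  assumes s: "sol a" and a: "a \<beta> \<noteq> 0"
  shows "\<exists>l1 l2 l3 l4. entry (B l1) 1 > 0 \<and> t l1 \<beta> \<in> \<int> \<and> entry (B l2) 1 < 0 \<and> t l2 \<beta> \<in> \<int>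
     \<and> entry (B l3) 2 > 0 \<and> t l3 \<beta> \<in> \<int> \<and> entry (B l4) 2 < 0 \<and> t l4 \<beta> \<in> \<int>"
proof -
  define X where "X = {x. a (\<beta> + ofz x) \<noteq> 0}"
  have "X = (\<lambda>x. \<beta> + ofz x) -` {\<alpha>. a \<alpha> \<noteq> 0}" by (auto simp: X_def)
  then have fX: "finite X" using sol_finite[OF s] inj_ofz_shift
    by (metis finite_vimageI)
  have "0 \<in> X" using a by (cases \<beta>) (simp add: X_def ofz_def zero_prod_def)
  then have neX: "X \<noteq> {}" by auto
  obtain x0 where x0: "x0 \<in> X" "x0 - (1,0) \<notin> X" "x0 - (0,1) \<notin> X" using lex_min_exists[OF fX neX] by blast
  obtain x1 where x1: "x1 \<in> X" "x1 + (1,0) \<notin> X" "x1 + (0,1) \<notin> X" using lex_max_exists[OF fX neX] by blast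
  have e1: "\<beta> + ofz x0 - unitexp 1 = \<beta> + ofz (x0 - (1,0))"
    by (simp add: ofz_def unitexp_def prod_eq_iff)
  have e2: "\<beta> + ofz x0 - unitexp 2 = \<beta> + ofz (x0 - (0,1))"
    by (simp add: ofz_def unitexp_def prod_eq_iff)
  have e3: "\<beta> + ofz (x1 + (1,0)) - unitexp 1 = \<beta> + ofz x1"
    by (simp add: ofz_def unitexp_def prod_eq_iff)
  have e4: "\<beta> + ofz (x1 + (0,1)) - unitexp 2 = \<beta> + ofz x1"
    by (simp add: ofz_def unitexp_def prod_eq_iff)
  have Q1: "Qsym B c 1 (\<beta> + ofz x0) = 0"
    using sol_eqn[OF s, of 1 "\<beta> + ofz x0"] x0 unfolding e1 by (simp add: X_def)
  have Q2: "Qsym B c 2 (\<beta> + ofz x0) = 0"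
    using sol_eqn[OF s, of 2 "\<beta> + ofz x0"] x0 unfolding e2 by (simp add: X_def)
  have P1: "Psym B c 1 (\<beta> + ofz x1) = 0"
    using sol_eqn[OF s, of 1 "\<beta> + ofz (x1 + (1,0))"] x1 unfolding e3 by (simp add: X_def)
  have P2: "Psym B c 2 (\<beta> + ofz x1) = 0"
    using sol_eqn[OF s, of 2 "\<beta> + ofz (x1 + (0,1))"] x1 unfolding e4 by (simp add: X_def)
  show ?thesis
    using Q_zero_row[OF Q1] Q_zero_row[OF Q2] P_zero_row[OF P1] P_zero_row[OF P2]
    by (auto simp: t_shift_Ints)
qed

lemma at_most_two:
  assumes "i \<noteq> j" "t i \<beta> \<in> \<int>" "t j \<beta> \<in> \<int>" "t l \<beta> \<in> \<int>"
  shows "l = i \<or> l = j"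
  using three_rows[of i j l \<beta>] assms by blast

lemma support_pair:
  assumes s: "sol a" and a: "a \<beta> \<noteq> 0"
  shows "\<exists>i j. i < j \<and> det2 (B i) (B j) \<noteq> 0 \<and> opposite_open_quadrants (B i) (B j) \<and> t i \<beta> \<in> \<int> \<and> t j \<beta> \<in> \<int>"
proof -
  obtain l1 l2 l3 l4 where L: "entry (B l1) 1 > 0" "t l1 \<beta> \<in> \<int>" "entry (B l2) 1 < 0" "t l2 \<beta> \<in> \<int>"
     "entry (B l3) 2 > 0" "t l3 \<beta> \<in> \<int>" "entry (B l4) 2 < 0" "t l4 \<beta> \<in> \<int>"
    using four_rows[OF s a] by blast
  have d12: "l1 \<noteq> l2" using L by auto
  have l3: "l3 = l1 \<or> l3 = l2" using at_most_two[OF d12 L(2) L(4) L(6)] .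
  have l4: "l4 = l1 \<or> l4 = l2" using at_most_two[OF d12 L(2) L(4) L(8)] .
  have d34: "l3 \<noteq> l4" using L by auto
  have opp12: "opposite_open_quadrants (B l1) (B l2)" "opposite_open_quadrants (B l2) (B l1)"
    using L l3 l4 d34 by (auto simp: opposite_open_quadrants_def entry_def sgn_if)
  have det12: "det2 (B l1) (B l2) \<noteq> 0" "det2 (B l2) (B l1) \<noteq> 0"
    using two_rows[OF d12 L(2) L(4)] two_rows[of l2 l1 \<beta>] d12 L by auto
  show ?thesis
  proof (cases "l1 < l2")
    case True then show ?thesis using opp12 det12 L by blast
  next
    case False then have "l2 < l1" using d12 by auto
    then show ?thesis using opp12 det12 L by blast
  qed
qed

end


lemma ff_Suc: "ff x (Suc n) = ff x n * (x - of_nat n)"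
  by (simp add: ff_def)

lemma ff_rGamma: "ff x n * rGamma (x + 1) = rGamma (x - of_nat n + 1)"
proof (induction n)
  case 0 then show ?case by (simp add: ff_def)
next
  case (Suc n)
  have "ff x (Suc n) * rGamma (x + 1) = (x - of_nat n) * rGamma (x - of_nat n + 1)"
    using Suc by (simp add: ff_Suc algebra_simps)
  also have "\<dots> = rGamma (x - of_nat n)" by (rule rGamma_plus1)
  also have "x - of_nat n = x - of_nat (Suc n) + 1" by simp
  finally show ?case .
qed

definition GG :: "('n::finite \<Rightarrow> int \<times> int) \<Rightarrow> complex ^ 'n \<Rightarrow> complex \<times> complex \<Rightarrow> complex" where
  "GG B c \<beta> = (\<Prod>l\<in>UNIV. rGamma (tt B c l \<beta> + 1))"

lemma GG_eqn:
  fixes B :: "'n::finite \<Rightarrow> int \<times> int"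
  shows "Qsym B c k \<beta> * GG B c \<beta> = Psym B c k (\<beta> - unitexp k) * GG B c (\<beta> - unitexp k)"
proof -
  define qf where "qf l = (if entry (B l) k > 0 then ff (tt B c l \<beta>) (nat (entry (B l) k)) else 1)" for l
  define pf where "pf l = (if entry (B l) k < 0 then ff (tt B c l (\<beta> - unitexp k)) (nat \<bar>entry (B l) k\<bar>) else 1)" for l
  have Q: "Qsym B c k \<beta> = (\<Prod>l\<in>UNIV. qf l)"
    unfolding Qsym_ff qf_def by (subst prod.inter_filter[symmetric]) auto
  have P: "Psym B c k (\<beta> - unitexp k) = (\<Prod>l\<in>UNIV. pf l)"
    unfolding Psym_ff pf_def by (subst prod.inter_filter[symmetric]) auto
  have row: "qf l * rGamma (tt B c l \<beta> + 1) = pf l * rGamma (tt B c l (\<beta> - unitexp k) + 1)" for l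
  proof -
    have tsh: "tt B c l (\<beta> - unitexp k) = tt B c l \<beta> - of_int (entry (B l) k)"
      by (simp add: tt_def bdot_diff bdot_unitexp)
    consider "entry (B l) k > 0" | "entry (B l) k < 0" | "entry (B l) k = 0" by linarith
    then show ?thesis
    proof cases
      case 1
      then show ?thesis using ff_rGamma[of "tt B c l \<beta>" "nat (entry (B l) k)"]
        by (simp add: qf_def pf_def tsh)
    next
      case 2
      have "ff (tt B c l \<beta> - of_int (entry (B l) k)) (nat \<bar>entry (B l) k\<bar>) *
            rGamma (tt B c l \<beta> - of_int (entry (B l) k) + 1) = rGamma (tt B c l \<beta> + 1)"
        using ff_rGamma[of "tt B c l \<beta> - of_int (entry (B l) k)" "nat \<bar>entry (B l) k\<bar>"] 2
        by simp
      then show ?thesis using 2 by (simp add: qf_def pf_def tsh)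
    next
      case 3 then show ?thesis by (simp add: qf_def pf_def tsh)
    qed
  qed
  have "Qsym B c k \<beta> * GG B c \<beta> = (\<Prod>l\<in>UNIV. qf l * rGamma (tt B c l \<beta> + 1))"
    by (simp add: Q GG_def prod.distrib)
  also have "\<dots> = (\<Prod>l\<in>UNIV. pf l * rGamma (tt B c l (\<beta> - unitexp k) + 1))"
    using row by simp
  also have "\<dots> = Psym B c k (\<beta> - unitexp k) * GG B c (\<beta> - unitexp k)"
    by (simp add: P GG_def prod.distrib)
  finally show ?thesis .
qed

definition smul :: "int \<Rightarrow> int \<times> int \<Rightarrow> int \<times> int" where
  "smul m d = (m * fst d, m * snd d)"

lemma smul_Suc: "smul (int (Suc m)) d = smul (int m) d + d"
  by (simp add: smul_def algebra_simps prod_eq_iff)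

locale pair = gen +
  fixes i j
  assumes ij: "i \<noteq> j" and Dnz: "det2 (B i) (B j) \<noteq> 0"
begin

definition bof :: "int \<times> int \<Rightarrow> complex \<times> complex" where
  "bof z = (let x1 = of_int (fst (B i)); x2 = of_int (snd (B i)); y1 = of_int (fst (B j)); y2 = of_int (snd (B j));
               D = of_int (det2 (B i) (B j)); u = of_int (fst z) - c$i; v = of_int (snd z) - c$j in
             ((y2 * u - x2 * v) / D, (x1 * v - y1 * u) / D))"

lemma Dc: "(of_int (det2 (B i) (B j)) :: complex) = of_int (fst (B i)) * of_int (snd (B j)) - of_int (snd (B i)) * of_int (fst (B j))"
  by (simp add: det2_def)

lemma Dc_nz: "(of_int (det2 (B i) (B j)) :: complex) \<noteq> 0"
  using Dnz by simp

lemma cramer_aux: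
  fixes x1 x2 y1 y2 u v :: complex
  assumes "x1 * y2 - x2 * y1 \<noteq> 0"
  shows "x1 * ((y2 * u - x2 * v) / (x1 * y2 - x2 * y1)) + x2 * ((x1 * v - y1 * u) / (x1 * y2 - x2 * y1)) = u"
    "y1 * ((y2 * u - x2 * v) / (x1 * y2 - x2 * y1)) + y2 * ((x1 * v - y1 * u) / (x1 * y2 - x2 * y1)) = v"
  using assms by (simp_all add: divide_simps, algebra+)

lemma t_bof: "t i (bof z) = of_int (fst z)" "t j (bof z) = of_int (snd z)"
proof -
  have D: "of_int (fst (B i)) * of_int (snd (B j)) - of_int (snd (B i)) * (of_int (fst (B j)) :: complex) \<noteq> 0"
    using Dc_nz Dc by simp
  show "t i (bof z) = of_int (fst z)"
    using cramer_aux(1)[OF D, of "of_int (fst z) - c$i" "of_int (snd z) - c$j"]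
    unfolding bof_def Let_def tt_def bdot_def Dc by simp
  show "t j (bof z) = of_int (snd z)"
    using cramer_aux(2)[OF D, of "of_int (fst z) - c$i" "of_int (snd z) - c$j"]
    unfolding bof_def Let_def tt_def bdot_def Dc by simp
qed

lemma t_inj:
  assumes "t i \<beta> = t i \<beta>'" "t j \<beta> = t j \<beta>'"
  shows "\<beta> = \<beta>'"
proof -
  obtain X Y X' Y' where b: "\<beta> = (X, Y)" "\<beta>' = (X', Y')" by (cases \<beta>, cases \<beta>') auto
  define x1 where "x1 = (of_int (fst (B i)) :: complex)"
  define x2 where "x2 = (of_int (snd (B i)) :: complex)"
  define y1 where "y1 = (of_int (fst (B j)) :: complex)"
  define y2 where "y2 = (of_int (snd (B j)) :: complex)"
  have e1: "x1 * (X - X') + x2 * (Y - Y') = 0" using assms(1)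
    by (simp add: b tt_def bdot_def x1_def x2_def algebra_simps)
  have e2: "y1 * (X - X') + y2 * (Y - Y') = 0" using assms(2)
    by (simp add: b tt_def bdot_def y1_def y2_def algebra_simps)
  have D: "x1 * y2 - x2 * y1 \<noteq> 0" using Dc_nz Dc by (simp add: x1_def x2_def y1_def y2_def)
  have "(x1 * y2 - x2 * y1) * (X - X') = y2 * (x1 * (X - X') + x2 * (Y - Y')) - x2 * (y1 * (X - X') + y2 * (Y - Y'))"
    by (simp add: algebra_simps)
  then have "X = X'" using e1 e2 D by simp
  have "(x1 * y2 - x2 * y1) * (Y - Y') = x1 * (y1 * (X - X') + y2 * (Y - Y')) - y1 * (x1 * (X - X') + x2 * (Y - Y'))"
    by (simp add: algebra_simps)
  then have "Y = Y'" using e1 e2 D by simp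
  show ?thesis using \<open>X = X'\<close> \<open>Y = Y'\<close> b by simp
qed

lemma bof_inj: "bof z = bof z' \<Longrightarrow> z = z'"
  using t_bof[of z] t_bof[of z'] by (metis of_int_eq_iff prod_eq_iff)

lemma bof_surj:
  assumes "t i \<beta> \<in> \<int>" "t j \<beta> \<in> \<int>"
  shows "\<exists>z. \<beta> = bof z"
proof -
  obtain u v where "t i \<beta> = of_int u" "t j \<beta> = of_int v" using assms by (auto elim!: Ints_cases)
  then have "\<beta> = bof (u, v)" by (intro t_inj) (simp_all add: t_bof)
  then show ?thesis by blast
qed

definition w :: "nat \<Rightarrow> int \<times> int" where
  "w k = (entry (B i) k, entry (B j) k)"

lemma bof_add_w: "bof (z + w k) = bof z + unitexp k"
  by (rule t_inj) (simp_all add: t_bof tt_add bdot_unitexp w_def)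

lemma bof_diff_w: "bof (z - w k) = bof z - unitexp k"
  using bof_add_w[of "z - w k" k] by (simp add: algebra_simps)

lemma other_rows: "t l (bof z) \<in> \<int> \<Longrightarrow> l = i \<or> l = j"
  using at_most_two[OF ij, of "bof z" l] by (simp add: t_bof)

lemma Qz: "Qsym B c k (bof (z + w k)) = 0 \<longleftrightarrow>
   (fst z < 0 \<and> 0 \<le> fst z + fst (w k)) \<or> (snd z < 0 \<and> 0 \<le> snd z + snd (w k))"
proof
  assume "Qsym B c k (bof (z + w k)) = 0"
  then obtain l m where l: "entry (B l) k > 0" "m < nat (entry (B l) k)" "t l (bof (z + w k)) = of_nat m"
    unfolding Qsym_zero_iff by blast
  then have "l = i \<or> l = j" using other_rows by (metis Ints_of_nat)
  then show "(fst z < 0 \<and> 0 \<le> fst z + fst (w k)) \<or> (snd z < 0 \<and> 0 \<le> snd z + snd (w k))"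
  proof
    assume "l = i"
    then have "(of_int (fst z + entry (B i) k) :: complex) = of_int (int m)" using l(3) t_bof[of "z + w k"]
      by (simp add: w_def)
    then have "fst z + entry (B i) k = int m" by (simp only: of_int_eq_iff)
    then show ?thesis using l(1,2) \<open>l = i\<close> by (simp add: w_def zless_nat_eq_int_zless)
  next
    assume "l = j"
    then have "(of_int (snd z + entry (B j) k) :: complex) = of_int (int m)" using l(3) t_bof[of "z + w k"]
      by (simp add: w_def)
    then have "snd z + entry (B j) k = int m" by (simp only: of_int_eq_iff)
    then show ?thesis using l(1,2) \<open>l = j\<close> by (simp add: w_def zless_nat_eq_int_zless)
  qed
next
  assume h: "(fst z < 0 \<and> 0 \<le> fst z + fst (w k)) \<or> (snd z < 0 \<and> 0 \<le> snd z + snd (w k))"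
  show "Qsym B c k (bof (z + w k)) = 0"
    unfolding Qsym_zero_iff
  proof (cases "fst z < 0 \<and> 0 \<le> fst z + fst (w k)")
    case True
    then have "entry (B i) k > 0 \<and> nat (fst z + entry (B i) k) < nat (entry (B i) k) \<and>
      t i (bof (z + w k)) = of_nat (nat (fst z + entry (B i) k))"
      by (simp add: t_bof w_def)
    then show "\<exists>l. 0 < entry (B l) k \<and> (\<exists>m<nat (entry (B l) k). t l (bof (z + w k)) = of_nat m)" by blast
  next
    case False
    then have "snd z < 0 \<and> 0 \<le> snd z + snd (w k)" using h by blast
    then have "entry (B j) k > 0 \<and> nat (snd z + entry (B j) k) < nat (entry (B j) k) \<and>
      t j (bof (z + w k)) = of_nat (nat (snd z + entry (B j) k))"
      by (simp add: t_bof w_def)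
    then show "\<exists>l. 0 < entry (B l) k \<and> (\<exists>m<nat (entry (B l) k). t l (bof (z + w k)) = of_nat m)" by blast
  qed
qed

lemma Pz: "Psym B c k (bof z) = 0 \<longleftrightarrow>
   (0 \<le> fst z \<and> fst z + fst (w k) < 0) \<or> (0 \<le> snd z \<and> snd z + snd (w k) < 0)"
proof
  assume "Psym B c k (bof z) = 0"
  then obtain l m where l: "entry (B l) k < 0" "m < nat \<bar>entry (B l) k\<bar>" "t l (bof z) = of_nat m"
    unfolding Psym_zero_iff by blast
  then have "l = i \<or> l = j" using other_rows by (metis Ints_of_nat)
  then show "(0 \<le> fst z \<and> fst z + fst (w k) < 0) \<or> (0 \<le> snd z \<and> snd z + snd (w k) < 0)"
  proof
    assume "l = i"
    then have "(of_int (fst z) :: complex) = of_int (int m)" using l(3) t_bof[of z] by simp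
    then have "fst z = int m" by (simp only: of_int_eq_iff)
    then show ?thesis using l(1,2) \<open>l = i\<close> by (simp add: w_def zless_nat_eq_int_zless)
  next
    assume "l = j"
    then have "(of_int (snd z) :: complex) = of_int (int m)" using l(3) t_bof[of z] by simp
    then have "snd z = int m" by (simp only: of_int_eq_iff)
    then show ?thesis using l(1,2) \<open>l = j\<close> by (simp add: w_def zless_nat_eq_int_zless)
  qed
next
  assume h: "(0 \<le> fst z \<and> fst z + fst (w k) < 0) \<or> (0 \<le> snd z \<and> snd z + snd (w k) < 0)"
  show "Psym B c k (bof z) = 0"
    unfolding Psym_zero_iff
  proof (cases "0 \<le> fst z \<and> fst z + fst (w k) < 0")
    case True
    then have "entry (B i) k < 0 \<and> nat (fst z) < nat \<bar>entry (B i) k\<bar> \<and>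
      t i (bof z) = of_nat (nat (fst z))"
      by (simp add: t_bof w_def)
    then show "\<exists>l. entry (B l) k < 0 \<and> (\<exists>m<nat \<bar>entry (B l) k\<bar>. t l (bof z) = of_nat m)" by blast
  next
    case False
    then have "0 \<le> snd z \<and> snd z + snd (w k) < 0" using h by blast
    then have "entry (B j) k < 0 \<and> nat (snd z) < nat \<bar>entry (B j) k\<bar> \<and>
      t j (bof z) = of_nat (nat (snd z))"
      by (simp add: t_bof w_def)
    then show "\<exists>l. entry (B l) k < 0 \<and> (\<exists>m<nat \<bar>entry (B l) k\<bar>. t l (bof z) = of_nat m)" by blast
  qed
qed

lemma zeqn:
  assumes "sol a" "k = 1 \<or> k = 2"
  shows "Qsym B c k (bof (z + w k)) * a (bof (z + w k)) = Psym B c k (bof z) * a (bof z)"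
  using sol_eqn[OF assms, of "bof (z + w k)"] by (simp add: bof_add_w)

lemma Geqn: "Qsym B c k (bof (z + w k)) * GG B c (bof (z + w k)) = Psym B c k (bof z) * GG B c (bof z)"
  using GG_eqn[of B c k "bof (z + w k)"] by (simp add: bof_add_w)

lemma G_nz:
  assumes "0 \<le> fst z" "0 \<le> snd z"
  shows "GG B c (bof z) \<noteq> 0"
proof -
  have "rGamma (t l (bof z) + 1) \<noteq> 0" for l
  proof
    assume "rGamma (t l (bof z) + 1) = 0"
    then have h: "t l (bof z) + 1 \<in> \<int>\<^sub>\<le>\<^sub>0" by (simp add: rGamma_eq_zero_iff)
    then obtain n where n: "t l (bof z) + 1 = - of_nat n" by (auto elim!: nonpos_Ints_cases')
    then have "t l (bof z) = of_int (- int n - 1)" by (simp add: algebra_simps)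
    then have "t l (bof z) \<in> \<int>" by simp
    then have "l = i \<or> l = j" by (rule other_rows)
    then show False
    proof
      assume "l = i"
      then have "of_int (fst z + 1) = (of_int (- int n) :: complex)" using n t_bof(1)[of z] by simp
      then have "fst z + 1 = - int n" by (simp only: of_int_eq_iff)
      then show False using assms by linarith
    next
      assume "l = j"
      then have "of_int (snd z + 1) = (of_int (- int n) :: complex)" using n t_bof(2)[of z] by simp
      then have "snd z + 1 = - int n" by (simp only: of_int_eq_iff)
      then show False using assms by linarith
    qed
  qed
  then show ?thesis unfolding GG_def by (simp add: prod_zero_iff)
qed

lemma edge_link:
  assumes s: "sol a" and k: "k = 1 \<or> k = 2" and d: "d = w k \<or> d = - w k"
    and e1: "fst z < 0 \<longleftrightarrow> fst (z + d) < 0" and e2: "snd z < 0 \<longleftrightarrow> snd (z + d) < 0"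
  shows "a (bof z) * GG B c (bof (z + d)) = a (bof (z + d)) * GG B c (bof z)"
proof -
  obtain x y where xy: "(x = z \<and> y = z + d) \<or> (x = z + d \<and> y = z)" and yx: "y = x + w k"
  proof (cases "d = w k")
    case True then show ?thesis using that[of z "z + d"] by simp
  next
    case False then have "d = - w k" using d by blast
    then show ?thesis using that[of "z + d" z] by simp
  qed
  have ex1: "fst x < 0 \<longleftrightarrow> fst (x + w k) < 0" and ex2: "snd x < 0 \<longleftrightarrow> snd (x + w k) < 0"
    unfolding yx[symmetric] using xy e1 e2 by auto
  have Q: "Qsym B c k (bof (x + w k)) \<noteq> 0" using ex1 ex2 by (simp add: Qz)
  have P: "Psym B c k (bof x) \<noteq> 0" using ex1 ex2 by (auto simp: Pz)
  have A: "Qsym B c k (bof (x + w k)) * a (bof (x + w k)) = Psym B c k (bof x) * a (bof x)" by (rule zeqn[OF s k])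
  have G: "Qsym B c k (bof (x + w k)) * GG B c (bof (x + w k)) = Psym B c k (bof x) * GG B c (bof x)" by (rule Geqn)
  define QQ where "QQ = Qsym B c k (bof (x + w k))"
  define PP where "PP = Psym B c k (bof x)"
  have A': "QQ * a (bof (x + w k)) = PP * a (bof x)" using A by (simp add: QQ_def PP_def)
  have G': "QQ * GG B c (bof (x + w k)) = PP * GG B c (bof x)" using G by (simp add: QQ_def PP_def)
  have "QQ * (a (bof x) * GG B c (bof (x + w k))) = a (bof x) * (QQ * GG B c (bof (x + w k)))"
    by (simp add: algebra_simps)
  also have "\<dots> = a (bof x) * (PP * GG B c (bof x))" using G' by simp
  also have "\<dots> = (PP * a (bof x)) * GG B c (bof x)" by (simp add: algebra_simps)
  also have "\<dots> = (QQ * a (bof (x + w k))) * GG B c (bof x)" using A' by simp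
  also have "\<dots> = QQ * (a (bof (x + w k)) * GG B c (bof x))" by (simp add: algebra_simps)
  finally have "a (bof x) * GG B c (bof (x + w k)) = a (bof (x + w k)) * GG B c (bof x)"
    using Q by (simp add: QQ_def)
  then have eq: "a (bof x) * GG B c (bof y) = a (bof y) * GG B c (bof x)" using yx by simp
  from xy show ?thesis
  proof
    assume "x = z \<and> y = z + d" then show ?thesis using eq by simp
  next
    assume "x = z + d \<and> y = z" then show ?thesis using eq by (simp add: mult.commute)
  qed
qed

lemma edge_link_nz:
  assumes s: "sol a" and k: "k = 1 \<or> k = 2" and d: "d = w k \<or> d = - w k"
    and e1: "fst z < 0 \<longleftrightarrow> fst (z + d) < 0" and e2: "snd z < 0 \<longleftrightarrow> snd (z + d) < 0"
    and nz: "a (bof z) \<noteq> 0"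
  shows "a (bof (z + d)) \<noteq> 0"
proof -
  obtain x y where xy: "(x = z \<and> y = z + d) \<or> (x = z + d \<and> y = z)" and yx: "y = x + w k"
  proof (cases "d = w k")
    case True then show ?thesis using that[of z "z + d"] by simp
  next
    case False then have "d = - w k" using d by blast
    then show ?thesis using that[of "z + d" z] by simp
  qed
  have ex1: "fst x < 0 \<longleftrightarrow> fst (x + w k) < 0" and ex2: "snd x < 0 \<longleftrightarrow> snd (x + w k) < 0"
    unfolding yx[symmetric] using xy e1 e2 by auto
  have Q: "Qsym B c k (bof (x + w k)) \<noteq> 0" using ex1 ex2 by (simp add: Qz)
  have P: "Psym B c k (bof x) \<noteq> 0" using ex1 ex2 by (auto simp: Pz)
  have A: "Qsym B c k (bof (x + w k)) * a (bof (x + w k)) = Psym B c k (bof x) * a (bof x)" by (rule zeqn[OF s k])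
  then have "a (bof (x + w k)) = 0 \<longleftrightarrow> a (bof x) = 0" using Q P by auto
  then have iff: "a (bof y) = 0 \<longleftrightarrow> a (bof x) = 0" using yx by simp
  from xy show ?thesis
  proof
    assume "x = z \<and> y = z + d" then show ?thesis using iff nz by simp
  next
    assume "x = z + d \<and> y = z" then show ?thesis using iff nz by simp
  qed
qed

lemma edge_force:
  assumes s: "sol a" and k: "k = 1 \<or> k = 2" and d: "d = w k \<or> d = - w k"
    and e1: "fst (z + d) < 0 \<longrightarrow> fst z < 0" and e2: "snd (z + d) < 0 \<longrightarrow> snd z < 0"
    and e3: "(fst z < 0 \<and> \<not> fst (z + d) < 0) \<or> (snd z < 0 \<and> \<not> snd (z + d) < 0)"
  shows "a (bof z) = 0"
proof (cases "d = w k")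
  case True
  have e3': "(fst z < 0 \<and> 0 \<le> fst z + fst (w k)) \<or> (snd z < 0 \<and> 0 \<le> snd z + snd (w k))"
    using e3 True by auto
  have e1': "\<not> (0 \<le> fst z \<and> fst z + fst (w k) < 0)" "\<not> (0 \<le> snd z \<and> snd z + snd (w k) < 0)"
    using e1 e2 True by auto
  have Q: "Qsym B c k (bof (z + w k)) = 0" using e3' by (simp only: Qz)
  have P: "Psym B c k (bof z) \<noteq> 0" using e1' by (simp only: Pz) blast
  show ?thesis using zeqn[OF s k, of z] Q P by simp
next
  case False
  then have dd: "d = - w k" using d by blast
  define z' where "z' = z + d"
  have zz: "z = z' + w k" by (simp add: z'_def dd)
  have fz: "fst z = fst z' + fst (w k)" "snd z = snd z' + snd (w k)" using zz by simp_all
  have e3a: "(fst z < 0 \<and> \<not> fst z' < 0) \<or> (snd z < 0 \<and> \<not> snd z' < 0)"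
    using e3 by (simp add: z'_def)
  have e1a: "fst z' < 0 \<longrightarrow> fst z < 0" "snd z' < 0 \<longrightarrow> snd z < 0"
    using e1 e2 by (simp_all add: z'_def)
  have e3': "(0 \<le> fst z' \<and> fst z' + fst (w k) < 0) \<or> (0 \<le> snd z' \<and> snd z' + snd (w k) < 0)"
    using e3a unfolding fz by auto
  have e1': "\<not> (fst z' < 0 \<and> 0 \<le> fst z' + fst (w k))" "\<not> (snd z' < 0 \<and> 0 \<le> snd z' + snd (w k))"
    using e1a unfolding fz by auto
  have Q: "Qsym B c k (bof (z' + w k)) \<noteq> 0" using e1' by (simp only: Qz) blast
  have P: "Psym B c k (bof z') = 0" using e3' by (simp only: Pz)
  show ?thesis using zeqn[OF s k, of z'] Q P zz by simp
qed

end


definition Nn :: "int \<times> int \<Rightarrow> bool" where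
  "Nn z \<longleftrightarrow> 0 \<le> fst z \<and> 0 \<le> snd z"

locale rw =
  fixes pa ra pb rb :: int
  assumes pos: "pa > 0" "ra > 0" "pb > 0" "rb > 0" and ord: "pb * ra > pa * rb"
begin

definition "Av = (pa, - ra)"
definition "Bv = (pb, - rb)"

definition step :: "int \<times> int \<Rightarrow> int \<times> int \<Rightarrow> bool" where
  "step z z' \<longleftrightarrow> Nn z \<and> Nn z' \<and> (z' = z + Bv \<or> z' = z - Av)"

definition normal :: "int \<times> int \<Rightarrow> bool" where
  "normal z \<longleftrightarrow> Nn z \<and> (\<forall>z'. \<not> step z z')"

lemma normal_iff: "normal z \<longleftrightarrow> Nn z \<and> fst z < pa \<and> snd z < rb"
proof -
  have "(\<forall>z'. \<not> step z z') \<longleftrightarrow> \<not> Nn z \<or> (fst z < pa \<and> snd z < rb)"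
  proof
    assume h: "\<forall>z'. \<not> step z z'"
    show "\<not> Nn z \<or> (fst z < pa \<and> snd z < rb)"
    proof (rule ccontr)
      assume "\<not> (\<not> Nn z \<or> (fst z < pa \<and> snd z < rb))"
      then have N: "Nn z" and "fst z \<ge> pa \<or> snd z \<ge> rb" by auto
      then show False
      proof (cases "fst z \<ge> pa")
        case True
        then have "step z (z - Av)" using N pos by (auto simp: step_def Nn_def Av_def)
        then show False using h by blast
      next
        case False
        then have "snd z \<ge> rb" using \<open>fst z \<ge> pa \<or> snd z \<ge> rb\<close> by auto
        then have "step z (z + Bv)" using N pos by (auto simp: step_def Nn_def Bv_def)
        then show False using h by blast
      qed
    qed
  next
    assume "\<not> Nn z \<or> (fst z < pa \<and> snd z < rb)"
    then show "\<forall>z'. \<not> step z z'"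
      by (auto simp: step_def Nn_def Av_def Bv_def prod_eq_iff)
  qed
  then show ?thesis by (auto simp: normal_def)
qed

lemma normal_set: "{z. normal z} = {0..<pa} \<times> {0..<rb}"
  by (auto simp: normal_iff Nn_def)

lemma card_normal: "card {z. normal z} = nat pa * nat rb"
  by (simp add: normal_set card_cartesian_product)

lemma finite_normal: "finite {z. normal z}"
  by (simp add: normal_set)

lemma diamond:
  assumes "step z x" "step z y" "x \<noteq> y"
  shows "\<exists>v. step x v \<and> step y v"
proof -
  have "(x = z + Bv \<and> y = z - Av) \<or> (x = z - Av \<and> y = z + Bv)" using assms by (auto simp: step_def)
  then show ?thesis
  proof
    assume h: "x = z + Bv \<and> y = z - Av"
    then have "step x (z + Bv - Av)" "step y (z + Bv - Av)" using assms pos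
      by (auto simp: step_def Nn_def Av_def Bv_def algebra_simps)
    then show ?thesis by blast
  next
    assume h: "x = z - Av \<and> y = z + Bv"
    then have "step x (z + Bv - Av)" "step y (z + Bv - Av)" using assms pos
      by (auto simp: step_def Nn_def Av_def Bv_def algebra_simps)
    then show ?thesis by blast
  qed
qed

definition psi :: "int \<times> int \<Rightarrow> int" where
  "psi z = (ra + rb) * fst z + (pa + pb) * snd z"

lemma psi_step: "step z z' \<Longrightarrow> psi z' = psi z + (pb * ra - pa * rb)"
  by (auto simp: step_def psi_def Av_def Bv_def algebra_simps)

lemma psi_step_less: "step z z' \<Longrightarrow> psi z < psi z'"
  using psi_step ord by fastforce

lemma psi_rtrancl: "step\<^sup>*\<^sup>* z P \<Longrightarrow> psi z \<le> psi P"
  by (induction rule: rtranclp_induct) (auto dest: psi_step_less)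

lemma normal_rtrancl: "step\<^sup>*\<^sup>* z P \<Longrightarrow> normal z \<Longrightarrow> z = P"
  by (induction rule: converse_rtranclp_induct) (auto simp: normal_def)

lemma confl1:
  assumes "step\<^sup>*\<^sup>* z P" "normal P" "step z x"
  shows "step\<^sup>*\<^sup>* x P"
  using assms
proof (induction arbitrary: x rule: converse_rtranclp_induct)
  case base
  then show ?case by (metis normal_def)
next
  case (step z y)
  show ?case
  proof (cases "x = y")
    case True then show ?thesis using step by simp
  next
    case False
    obtain v where v: "step x v" "step y v" using diamond[OF step.prems(2) step.hyps(1)] False by blast
    have "step\<^sup>*\<^sup>* v P" using step.IH[OF step.prems(1) v(2)] .
    then show ?thesis using v(1) by (meson converse_rtranclp_into_rtranclp)
  qed
qed

lemma unique_nf: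
  assumes "step\<^sup>*\<^sup>* z P" "step\<^sup>*\<^sup>* z P'" "normal P" "normal P'"
  shows "P = P'"
  using assms(2,1,3,4)
proof (induction rule: converse_rtranclp_induct)
  case base
  then show ?case using normal_rtrancl by blast
next
  case (step z y)
  have "step\<^sup>*\<^sup>* y P" using confl1[OF step.prems(1,2) step.hyps(1)] .
  then show ?case using step.IH step.prems by blast
qed

lemma edge_reach:
  assumes "step z z'" "normal P"
  shows "step\<^sup>*\<^sup>* z P \<longleftrightarrow> step\<^sup>*\<^sup>* z' P"
  using confl1[OF _ assms(2) assms(1)] assms(1) by (meson converse_rtranclp_into_rtranclp)

lemma Nn_rtrancl: "step\<^sup>*\<^sup>* z P \<Longrightarrow> Nn P \<Longrightarrow> Nn z"
  by (induction rule: converse_rtranclp_induct) (auto simp: step_def)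

lemma finite_reach: "finite {z. Nn z \<and> step\<^sup>*\<^sup>* z P}"
proof -
  have "{z. Nn z \<and> step\<^sup>*\<^sup>* z P} \<subseteq> {0..psi P} \<times> {0..psi P}"
  proof
    fix z assume "z \<in> {z. Nn z \<and> step\<^sup>*\<^sup>* z P}"
    then have h: "Nn z" "step\<^sup>*\<^sup>* z P" by auto
    have "psi z \<le> psi P" using psi_rtrancl[OF h(2)] .
    moreover have "(ra + rb) * fst z \<ge> fst z" "(pa + pb) * snd z \<ge> snd z" using h(1) pos
      by (auto simp: Nn_def) (smt (verit) mult_le_cancel_right1)+
    ultimately show "z \<in> {0..psi P} \<times> {0..psi P}" using h(1) by (auto simp: Nn_def psi_def mem_Times_iff)
  qed
  then show ?thesis by (rule finite_subset) simp
qed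

lemma reach_normal:
  assumes fin: "finite S" and zS: "z \<in> S" and cl: "\<And>x y. x \<in> S \<Longrightarrow> step x y \<Longrightarrow> y \<in> S" and Nz: "Nn z"
  shows "\<exists>P. normal P \<and> step\<^sup>*\<^sup>* z P"
proof -
  define K where "K = Max (psi ` S)"
  have K: "x \<in> S \<Longrightarrow> psi x \<le> K" for x using fin by (simp add: K_def)
  have "\<forall>z. z \<in> S \<longrightarrow> Nn z \<longrightarrow> nat (K - psi z) = n \<longrightarrow> (\<exists>P. normal P \<and> step\<^sup>*\<^sup>* z P)" for n
  proof (induction n rule: less_induct)
    case (less n)
    show ?case
    proof (intro allI impI)
      fix z assume z: "z \<in> S" "Nn z" "nat (K - psi z) = n"
      show "\<exists>P. normal P \<and> step\<^sup>*\<^sup>* z P"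
      proof (cases "normal z")
        case True then show ?thesis by blast
      next
        case False
        then obtain z' where z': "step z z'" using z(2) by (auto simp: normal_def)
        have z'S: "z' \<in> S" using cl[OF z(1) z'] .
        have "psi z < psi z'" using psi_step_less[OF z'] .
        moreover have "psi z' \<le> K" using K[OF z'S] .
        ultimately have "nat (K - psi z') < n" using z(3) by linarith
        moreover have "Nn z'" using z' by (simp add: step_def)
        ultimately obtain P where "normal P" "step\<^sup>*\<^sup>* z' P" using less z'S by blast
        then show ?thesis using z' by (meson converse_rtranclp_into_rtranclp)
      qed
    qed
  qed
  then show ?thesis using zS Nz by blast
qed

end


locale opp = pair +
  assumes opp: "opposite_open_quadrants (B i) (B j)"
begin

definition "p1 = \<bar>fst (B i)\<bar>"
definition "r1 = \<bar>fst (B j)\<bar>"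
definition "p2 = \<bar>snd (B i)\<bar>"
definition "r2 = \<bar>snd (B j)\<bar>"

lemma pr_pos: "p1 > 0" "r1 > 0" "p2 > 0" "r2 > 0"
  using opp by (auto simp: opposite_open_quadrants_def p1_def r1_def p2_def r2_def sgn_if split: if_splits)

lemma signs: "fst (B j) = - sgn (fst (B i)) * r1" "snd (B j) = - sgn (snd (B i)) * r2"
  "fst (B i) = sgn (fst (B i)) * p1" "snd (B i) = sgn (snd (B i)) * p2"
  "sgn (fst (B i)) = 1 \<or> sgn (fst (B i)) = -1" "sgn (snd (B i)) = 1 \<or> sgn (snd (B i)) = -1"
  using opp by (auto simp: opposite_open_quadrants_def p1_def r1_def p2_def r2_def sgn_if abs_if split: if_splits)

lemma pr_ne: "p2 * r1 \<noteq> p1 * r2"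
proof
  assume h: "p2 * r1 = p1 * r2"
  have "det2 (B i) (B j) = fst (B i) * snd (B j) - snd (B i) * fst (B j)" by (simp add: det2_def)
  also have "\<dots> = sgn (fst (B i)) * sgn (snd (B i)) * (p2 * r1 - p1 * r2)"
    by (subst signs(1), subst signs(2), subst signs(3), subst signs(4)) (simp add: algebra_simps)
  finally show False using h Dnz by simp
qed

definition wh :: "nat \<Rightarrow> int \<times> int" where
  "wh k = (if entry (B i) k > 0 then w k else - w k)"

lemma wh1: "wh 1 = (p1, - r1)" and wh2: "wh 2 = (p2, - r2)"
  using signs by (auto simp: wh_def w_def entry_def p1_def r1_def p2_def r2_def sgn_if split: if_splits)

lemma wh1': "wh (Suc 0) = (p1, - r1)" using wh1 by simp

lemma wh_w: "wh k = w k \<or> wh k = - w k"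
  by (simp add: wh_def)

definition "ori \<longleftrightarrow> p2 * r1 > p1 * r2"
definition "pa = (if ori then p1 else p2)"
definition "ra = (if ori then r1 else r2)"
definition "pb = (if ori then p2 else p1)"
definition "rb = (if ori then r2 else r1)"

sublocale R: rw pa ra pb rb
proof
  show "pa > 0" "ra > 0" "pb > 0" "rb > 0" using pr_pos by (auto simp: pa_def ra_def pb_def rb_def)
  show "pb * ra > pa * rb" using pr_ne by (auto simp: pa_def ra_def pb_def rb_def ori_def)
qed

definition nrm :: "int \<times> int \<Rightarrow> bool" where "nrm P \<longleftrightarrow> R.normal P"

lemma card_nrm: "card {P. nrm P} = nu (B i) (B j)"
proof -
  have c: "card {P. nrm P} = nat (pa * rb)" using R.pos by (simp add: nrm_def R.card_normal nat_mult_distrib)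
  have n: "nu (B i) (B j) = min (nat (p1 * r2)) (nat (p2 * r1))"
    by (simp add: nu_def p1_def r1_def p2_def r2_def abs_mult mult.commute)
  show ?thesis
  proof (cases ori)
    case True
    then have "p1 * r2 < p2 * r1" by (simp add: ori_def)
    then show ?thesis using c n True by (simp add: pa_def rb_def min_def)
  next
    case False
    then have "p2 * r1 < p1 * r2" using pr_ne by (simp add: ori_def)
    then show ?thesis using c n False by (simp add: pa_def rb_def min_def mult.commute)
  qed
qed

lemma finite_nrm: "finite {P. nrm P}"
  by (simp add: nrm_def R.finite_normal)

lemma AvBv: "(R.Av = wh 1 \<and> R.Bv = wh 2) \<or> (R.Av = wh 2 \<and> R.Bv = wh 1)"
proof -
  have "R.Av = (pa, - ra)" "R.Bv = (pb, - rb)" by (simp_all add: R.Av_def R.Bv_def)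
  then show ?thesis by (cases ori) (simp_all add: wh1' wh2 pa_def ra_def pb_def rb_def)
qed

definition zedge :: "int \<times> int \<Rightarrow> int \<times> int \<Rightarrow> bool" where
  "zedge z z' \<longleftrightarrow> Nn z \<and> Nn z' \<and> (\<exists>k. (k = 1 \<or> k = 2) \<and> (z' = z + w k \<or> z' = z - w k))"

lemma zedge_step: "zedge z z' \<Longrightarrow> R.step z z' \<or> R.step z' z"
proof -
  assume h: "zedge z z'"
  then obtain k where k: "k = 1 \<or> k = 2" "z' = z + w k \<or> z' = z - w k" and N: "Nn z" "Nn z'"
    by (auto simp: zedge_def)
  have "z' = z + wh k \<or> z' = z - wh k" using k(2) wh_w[of k] by (auto simp: algebra_simps)
  moreover have "wh k = R.Av \<or> wh k = R.Bv" using AvBv k(1) by auto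
  ultimately have "z' = z + R.Bv \<or> z' = z - R.Av \<or> z = z' + R.Bv \<or> z = z' - R.Av"
    by (auto simp: algebra_simps)
  then show ?thesis using N by (auto simp: R.step_def)
qed

lemma zedge_reach: "zedge z z' \<Longrightarrow> nrm P \<Longrightarrow> R.step\<^sup>*\<^sup>* z P \<longleftrightarrow> R.step\<^sup>*\<^sup>* z' P"
  using zedge_step R.edge_reach unfolding nrm_def by blast

lemma step_zedge: "R.step z z' \<Longrightarrow> zedge z z'"
proof -
  assume h: "R.step z z'"
  have "z' = z + wh 1 \<or> z' = z - wh 1 \<or> z' = z + wh 2 \<or> z' = z - wh 2"
    using h AvBv by (auto simp: R.step_def)
  then have "\<exists>k. (k = 1 \<or> k = 2) \<and> (z' = z + w k \<or> z' = z - w k)"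
    using wh_w[of 1] wh_w[of 2] by (auto simp: algebra_simps)
  then show ?thesis using h by (auto simp: zedge_def R.step_def)
qed

lemma w_nz: "w 1 \<noteq> 0"
  using pr_pos by (auto simp: w_def entry_def p1_def zero_prod_def)

lemma walk_forever:
  assumes s: "sol a" and d: "d = w 1 \<or> d = - w 1" and nz: "a (bof z) \<noteq> 0"
    and st: "\<And>m::nat. (fst (z + smul (int m) d) < 0 \<longleftrightarrow> fst z < 0) \<and> (snd (z + smul (int m) d) < 0 \<longleftrightarrow> snd z < 0)"
  shows False
proof -
  have all: "a (bof (z + smul (int m) d)) \<noteq> 0" for m
  proof (induction m)
    case 0 then show ?case using nz by (simp add: smul_def zero_prod_def[symmetric])
  next
    case (Suc m)
    define z0 where "z0 = z + smul (int m) d"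
    have e: "z + smul (int (Suc m)) d = z0 + d" by (simp only: z0_def smul_Suc add.assoc)
    have s1: "fst z0 < 0 \<longleftrightarrow> fst z < 0" "snd z0 < 0 \<longleftrightarrow> snd z < 0" using st[of m] by (simp_all add: z0_def)
    have s2: "fst (z0 + d) < 0 \<longleftrightarrow> fst z < 0" "snd (z0 + d) < 0 \<longleftrightarrow> snd z < 0"
      using st[of "Suc m"] unfolding e by simp_all
    have "a (bof (z0 + d)) \<noteq> 0"
      by (rule edge_link_nz[OF s _ d _ _ Suc[folded z0_def]]) (use s1 s2 in auto)
    then show ?case using e by simp
  qed
  have d0: "d \<noteq> 0" using d w_nz by auto
  have inj: "inj (\<lambda>m::nat. bof (z + smul (int m) d))"
  proof (rule injI)
    fix m m' assume "bof (z + smul (int m) d) = bof (z + smul (int m') d)"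
    then have "z + smul (int m) d = z + smul (int m') d" by (rule bof_inj)
    then have "smul (int m) d = smul (int m') d" by simp
    then show "m = m'" using d0 by (auto simp: smul_def zero_prod_def prod_eq_iff)
  qed
  have "range (\<lambda>m::nat. bof (z + smul (int m) d)) \<subseteq> {\<alpha>. a \<alpha> \<noteq> 0}" using all by auto
  then have "finite (range (\<lambda>m::nat. bof (z + smul (int m) d)))"
    using sol_finite[OF s] finite_subset by blast
  then show False using inj by (simp add: finite_image_iff)
qed

lemma orthant:
  assumes s: "sol a" and nz: "a (bof z) \<noteq> 0"
  shows "Nn z"
proof (rule ccontr)
  assume nN: "\<not> Nn z"
  define d where "d = wh 1"
  have dw: "d = w 1 \<or> d = - w 1" using wh_w by (simp add: d_def)
  have dd: "d = (p1, - r1)" by (simp add: d_def wh1')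
  have dm: "- d = w 1 \<or> - d = - w 1" using dw by auto
  have mp: "0 \<le> p1" "0 \<le> r1" using pr_pos by simp_all
  consider "fst z < 0" "snd z < 0" | "fst z < 0" "snd z \<ge> 0" | "fst z \<ge> 0" "snd z < 0"
    using nN unfolding Nn_def by (meson not_le)
  then show False
  proof cases
    case 2
    show False
      by (rule walk_forever[OF s dm nz])
         (use 2 mp in \<open>(auto simp: smul_def dd), (smt (verit) mult_nonneg_nonneg of_nat_0_le_iff)+\<close>)
  next
    case 3
    show False
      by (rule walk_forever[OF s dw nz])
         (use 3 mp in \<open>(auto simp: smul_def dd), (smt (verit) mult_nonneg_nonneg of_nat_0_le_iff)+\<close>)
  next
    case 1
    define X where "X = - fst z - 1"
    define q where "q = X div p1"
    define m0 where "m0 = nat q"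
    have X0: "X \<ge> 0" using 1 by (simp add: X_def)
    have q0: "q \<ge> 0" using X0 pr_pos by (simp add: q_def pos_imp_zdiv_nonneg_iff)
    have m0q: "int m0 = q" using q0 by (simp add: m0_def)
    have dm: "q * p1 + X mod p1 = X" unfolding q_def by (rule div_mult_mod_eq)
    have md: "0 \<le> X mod p1" "X mod p1 < p1" using pr_pos by simp_all
    have m0a: "fst z + int m0 * p1 < 0" using dm md unfolding m0q X_def by (simp; linarith)
    have m0b: "fst z + (int m0 + 1) * p1 \<ge> 0" using dm md unfolding m0q X_def by (simp add: distrib_right; linarith)
    have all: "m \<le> m0 \<Longrightarrow> a (bof (z + smul (int m) d)) \<noteq> 0" for m
    proof (induction m)
      case 0 then show ?case using nz by (simp add: smul_def zero_prod_def[symmetric])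
    next
      case (Suc m)
      define z0 where "z0 = z + smul (int m) d"
      have e: "z + smul (int (Suc m)) d = z0 + d" by (simp only: z0_def smul_Suc add.assoc)
      have "int m + 1 \<le> int m0" using Suc.prems by simp
      then have "(int m + 1) * p1 \<le> int m0 * p1" using pr_pos by (intro mult_right_mono) simp_all
      then have mm: "int m * p1 + p1 \<le> int m0 * p1" by (simp add: algebra_simps)
      have f1: "fst z0 < 0" "fst (z0 + d) < 0"
        using mm m0a pr_pos by (auto simp: z0_def smul_def dd algebra_simps)
      have sn: "0 \<le> int m * r1" using pr_pos by simp
      have "snd z0 = snd z - int m * r1" "snd (z0 + d) = snd z - int m * r1 - r1"
        by (simp_all add: z0_def smul_def dd)
      then have f2: "snd z0 < 0" "snd (z0 + d) < 0"
        using 1 sn pr_pos by linarith+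
      have IH: "a (bof z0) \<noteq> 0" using Suc by (simp add: z0_def)
      have "a (bof (z0 + d)) \<noteq> 0"
        by (rule edge_link_nz[OF s _ dw _ _ IH]) (use f1 f2 in auto)
      then show ?case using e by simp
    qed
    have f1: "fst (z + smul (int m0) d) < 0" "\<not> fst (z + smul (int m0) d + d) < 0"
      using m0a m0b by (auto simp: smul_def dd algebra_simps)
    have f2: "snd (z + smul (int m0) d) < 0" "snd (z + smul (int m0) d + d) < 0"
      using 1 mp by (auto simp: smul_def dd algebra_simps) (smt (verit) mult_nonneg_nonneg of_nat_0_le_iff)+
    have "a (bof (z + smul (int m0) d)) = 0"
      by (rule edge_force[OF s _ dw]) (use f1 f2 in auto)
    then show False using all by blast
  qed
qed

end


context opp
begin

definition memb :: "int \<times> int \<Rightarrow> complex \<times> complex \<Rightarrow> bool" where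
  "memb P \<beta> \<longleftrightarrow> (\<exists>z. Nn z \<and> R.step\<^sup>*\<^sup>* z P \<and> \<beta> = bof z)"

definition sfun :: "int \<times> int \<Rightarrow> puiseux" where
  "sfun P = (\<lambda>\<beta>. if memb P \<beta> then GG B c \<beta> else 0)"

lemma step_kd:
  assumes "R.step z y"
  shows "\<exists>k d. (k = 1 \<or> k = 2) \<and> (d = w k \<or> d = - w k) \<and> y = z + d"
proof -
  from step_zedge[OF assms] obtain k where "k = 1 \<or> k = 2" "y = z + w k \<or> y = z - w k"
    by (auto simp: zedge_def)
  then show ?thesis by (metis diff_conv_add_uminus)
qed

lemma Nn_fst_snd: "Nn z \<Longrightarrow> \<not> fst z < 0 \<and> \<not> snd z < 0"
  by (auto simp: Nn_def)

lemma Hop_sfun: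
  assumes P: "nrm P" and k: "k = 1 \<or> k = 2"
  shows "Hop B c k (sfun P) = 0"
proof
  fix \<beta>
  show "Hop B c k (sfun P) \<beta> = 0 \<beta>"
  proof (cases "memb P \<beta>")
    case True
    then obtain z where z: "Nn z" "R.step\<^sup>*\<^sup>* z P" "\<beta> = bof z" by (auto simp: memb_def)
    have be: "\<beta> - unitexp k = bof (z - w k)" using z(3) by (simp add: bof_diff_w)
    show ?thesis
    proof (cases "memb P (\<beta> - unitexp k)")
      case True
      then show ?thesis using \<open>memb P \<beta>\<close> GG_eqn[of B c k \<beta>] by (simp add: Hop_def sfun_def)
    next
      case False
      have nN: "\<not> Nn (z - w k)"
      proof
        assume N: "Nn (z - w k)"
        have "zedge (z - w k) z" using N z(1) k unfolding zedge_def by (metis diff_add_cancel)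
        then have "R.step\<^sup>*\<^sup>* (z - w k) P" using zedge_reach[OF _ P] z(2) by blast
        then show False using False N be unfolding memb_def by blast
      qed
      have "Qsym B c k (bof ((z - w k) + w k)) = 0"
        unfolding Qz using nN z(1) by (auto simp: Nn_def)
      then have "Qsym B c k \<beta> = 0" using z(3) by simp
      then show ?thesis using False by (simp add: Hop_def sfun_def)
    qed
  next
    case False
    show ?thesis
    proof (cases "memb P (\<beta> - unitexp k)")
      case True
      then obtain z0 where z0: "Nn z0" "R.step\<^sup>*\<^sup>* z0 P" "\<beta> - unitexp k = bof z0" by (auto simp: memb_def)
      have be: "\<beta> = bof (z0 + w k)" using z0(3) by (simp add: bof_add_w algebra_simps)
      have nN: "\<not> Nn (z0 + w k)"
      proof
        assume N: "Nn (z0 + w k)"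
        have "zedge z0 (z0 + w k)" using N z0(1) k unfolding zedge_def by blast
        then have "R.step\<^sup>*\<^sup>* (z0 + w k) P" using zedge_reach[OF _ P] z0(2) by blast
        then show False using \<open>\<not> memb P \<beta>\<close> N be unfolding memb_def by blast
      qed
      have "Psym B c k (bof z0) = 0"
        unfolding Pz using nN z0(1) by (auto simp: Nn_def)
      then have "Psym B c k (\<beta> - unitexp k) = 0" using z0(3) by simp
      then show ?thesis using False by (simp add: Hop_def sfun_def)
    next
      case False
      then show ?thesis using \<open>\<not> memb P \<beta>\<close> by (simp add: Hop_def sfun_def)
    qed
  qed
qed

lemma sfun_finite: "finite {\<alpha>. sfun P \<alpha> \<noteq> 0}"
proof -
  have "{\<alpha>. sfun P \<alpha> \<noteq> 0} \<subseteq> bof ` {z. Nn z \<and> R.step\<^sup>*\<^sup>* z P}"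
    by (auto simp: sfun_def memb_def split: if_splits)
  moreover have "finite (bof ` {z. Nn z \<and> R.step\<^sup>*\<^sup>* z P})" using R.finite_reach by simp
  ultimately show ?thesis by (rule finite_subset)
qed

lemma sfun_sol: "nrm P \<Longrightarrow> sol (sfun P)"
  using Hop_sfun[of P 1] Hop_sfun[of P 2] sfun_finite[of P]
  by (simp add: sol_def horn_puiseux_solutions_def is_puiseux_poly_def)

lemma memb_peak: "nrm P \<Longrightarrow> memb P (bof P)"
  unfolding memb_def nrm_def R.normal_def by blast

lemma sfun_peak: "nrm P \<Longrightarrow> sfun P (bof P) = GG B c (bof P)"
  using memb_peak by (simp add: sfun_def)

lemma G_peak_nz: "nrm P \<Longrightarrow> GG B c (bof P) \<noteq> 0"
  using G_nz by (auto simp: nrm_def R.normal_def Nn_def)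

lemma step_ratio:
  assumes s: "sol a" and st: "R.step z y"
  shows "a (bof z) * GG B c (bof y) = a (bof y) * GG B c (bof z)"
proof -
  obtain k d where kd: "k = 1 \<or> k = 2" "d = w k \<or> d = - w k" "y = z + d" using step_kd[OF st] by blast
  have N: "Nn z" "Nn y" using st by (auto simp: R.step_def)
  show ?thesis using edge_link[OF s kd(1,2), of z] N kd(3) by (auto simp: Nn_def)
qed

lemma step_nz:
  assumes s: "sol a" and st: "R.step z y" and nz: "a (bof z) \<noteq> 0"
  shows "a (bof y) \<noteq> 0"
proof -
  obtain k d where kd: "k = 1 \<or> k = 2" "d = w k \<or> d = - w k" "y = z + d" using step_kd[OF st] by blast
  have N: "Nn z" "Nn y" using st by (auto simp: R.step_def)
  show ?thesis using edge_link_nz[OF s kd(1,2) _ _ nz] N kd(3) by (auto simp: Nn_def)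
qed

lemma reach_ratio:
  assumes s: "sol a" and r: "R.step\<^sup>*\<^sup>* z P" and NP: "Nn P"
  shows "a (bof z) * GG B c (bof P) = a (bof P) * GG B c (bof z)"
  using r
proof (induction rule: converse_rtranclp_induct)
  case base then show ?case by (simp add: mult.commute)
next
  case (step z y)
  have e1: "a (bof z) * GG B c (bof y) = a (bof y) * GG B c (bof z)" by (rule step_ratio[OF s step.hyps(1)])
  have Ny: "Nn y" using step.hyps(1) by (simp add: R.step_def)
  have Gy: "GG B c (bof y) \<noteq> 0" using G_nz Ny by (simp add: Nn_def)
  have "GG B c (bof y) * (a (bof z) * GG B c (bof P)) = (a (bof z) * GG B c (bof y)) * GG B c (bof P)"
    by (simp add: algebra_simps)
  also have "\<dots> = (a (bof y) * GG B c (bof P)) * GG B c (bof z)" using e1 by (simp add: algebra_simps)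
  also have "\<dots> = (a (bof P) * GG B c (bof y)) * GG B c (bof z)" using step.IH by simp
  also have "\<dots> = GG B c (bof y) * (a (bof P) * GG B c (bof z))" by (simp add: algebra_simps)
  finally show ?case using Gy by simp
qed

lemma span_exists:
  assumes s: "sol a" and nz: "a (bof z) \<noteq> 0"
  shows "\<exists>P. nrm P \<and> memb P (bof z)"
proof -
  define S where "S = {z. a (bof z) \<noteq> 0}"
  have "S = bof -` {\<alpha>. a \<alpha> \<noteq> 0}" by (auto simp: S_def)
  moreover have "inj bof" using bof_inj by (auto simp: inj_def)
  ultimately have fS: "finite S" using finite_vimageI[OF sol_finite[OF s], of bof] by simp
  have cl: "x \<in> S \<Longrightarrow> R.step x y \<Longrightarrow> y \<in> S" for x y using step_nz[OF s] by (auto simp: S_def)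
  have Nz: "Nn z" using orthant[OF s nz] .
  have zS: "z \<in> S" using nz by (simp add: S_def)
  have "\<exists>P. R.normal P \<and> R.step\<^sup>*\<^sup>* z P"
  proof (rule R.reach_normal[OF fS zS])
    fix x y assume "x \<in> S" "R.step x y" then show "y \<in> S" by (rule cl)
  next
    show "Nn z" by (rule Nz)
  qed
  then obtain P where "R.normal P" "R.step\<^sup>*\<^sup>* z P" by blast
  then show ?thesis using Nz unfolding nrm_def memb_def by blast
qed

lemma memb_unique: "memb P \<beta> \<Longrightarrow> memb P' \<beta> \<Longrightarrow> nrm P \<Longrightarrow> nrm P' \<Longrightarrow> P = P'"
  unfolding memb_def nrm_def using bof_inj R.unique_nf by metis

lemma memb_t: "memb P \<beta> \<Longrightarrow> t i \<beta> \<in> \<int> \<and> t j \<beta> \<in> \<int>"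
  by (auto simp: memb_def t_bof)

lemma memb_value:
  assumes s: "sol a" and P: "nrm P" and m: "memb P \<beta>"
  shows "a (bof P) / GG B c (bof P) * GG B c \<beta> = a \<beta>"
proof -
  obtain z where z: "Nn z" "R.step\<^sup>*\<^sup>* z P" "\<beta> = bof z" using m by (auto simp: memb_def)
  have NP: "Nn P" using P by (simp add: nrm_def R.normal_def)
  have "a (bof z) * GG B c (bof P) = a (bof P) * GG B c (bof z)" by (rule reach_ratio[OF s z(2) NP])
  then show ?thesis using G_peak_nz[OF P] z(3) by (simp add: field_simps)
qed

end


interpretation pv: vector_space cscale
  by unfold_locales (simp_all add: cscale_def fun_eq_iff algebra_simps)

lemma sum_single':
  assumes "finite A" "x \<in> A" "\<And>y. y \<in> A \<Longrightarrow> y \<noteq> x \<Longrightarrow> f y = 0"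
  shows "sum f A = (f x :: 'b::comm_monoid_add)"
proof -
  have "sum f A = f x + sum f (A - {x})" using assms(1,2) by (rule sum.remove)
  moreover have "sum f (A - {x}) = 0" using assms(3) by (intro sum.neutral) auto
  ultimately show ?thesis by simp
qed

lemma sum_fun_app:
  fixes f :: "'x \<Rightarrow> puiseux"
  shows "(\<Sum>x\<in>A. f x) \<beta> = (\<Sum>x\<in>A. f x \<beta>)"
  by (induction A rule: infinite_finite_induct) auto

lemma subspace_sols: "pv.subspace (horn_puiseux_solutions B c)"
proof -
  have lin: "Hop B c k (a + b) = Hop B c k a + Hop B c k b" "Hop B c k (cscale z a) = cscale z (Hop B c k a)" for k a b z
    by (auto simp: Hop_def cscale_def fun_eq_iff algebra_simps)
  have fin_add: "finite {\<alpha>. (a + b) \<alpha> \<noteq> 0}" if "finite {\<alpha>. a \<alpha> \<noteq> 0}" "finite {\<alpha>. b \<alpha> \<noteq> 0}" for a b :: puiseux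
    by (rule finite_subset[of _ "{\<alpha>. a \<alpha> \<noteq> 0} \<union> {\<alpha>. b \<alpha> \<noteq> 0}"]) (use that in auto)
  have fin_sc: "finite {\<alpha>. cscale z a \<alpha> \<noteq> 0}" if "finite {\<alpha>. a \<alpha> \<noteq> 0}" for a z
    by (rule finite_subset[of _ "{\<alpha>. a \<alpha> \<noteq> 0}"]) (use that in \<open>auto simp: cscale_def\<close>)
  have z: "Hop B c k 0 = 0" for k by (simp add: Hop_def fun_eq_iff)
  show ?thesis
    unfolding pv.subspace_def horn_puiseux_solutions_def is_puiseux_poly_def
  proof (intro conjI ballI allI)
    show "0 \<in> {a. finite {\<alpha>. a \<alpha> \<noteq> 0} \<and> Hop B c 1 a = 0 \<and> Hop B c 2 a = 0}" using z by simp
  next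
    fix x y assume "x \<in> {a. finite {\<alpha>. a \<alpha> \<noteq> 0} \<and> Hop B c 1 a = 0 \<and> Hop B c 2 a = 0}"
      "y \<in> {a. finite {\<alpha>. a \<alpha> \<noteq> 0} \<and> Hop B c 1 a = 0 \<and> Hop B c 2 a = 0}"
    then show "x + y \<in> {a. finite {\<alpha>. a \<alpha> \<noteq> 0} \<and> Hop B c 1 a = 0 \<and> Hop B c 2 a = 0}"
      using lin(1)[of _ x y] fin_add[of x y] by simp
  next
    fix z x assume "x \<in> {a. finite {\<alpha>. a \<alpha> \<noteq> 0} \<and> Hop B c 1 a = 0 \<and> Hop B c 2 a = 0}"
    then show "cscale z x \<in> {a. finite {\<alpha>. a \<alpha> \<noteq> 0} \<and> Hop B c 1 a = 0 \<and> Hop B c 2 a = 0}"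
      using lin(2)[of _ z x] fin_sc[of x z] by (simp add: cscale_def fun_eq_iff)
  qed
qed

context gen
begin

definition "Pairs = {(i, j). i < j \<and> det2 (B i) (B j) \<noteq> 0 \<and> opposite_open_quadrants (B i) (B j)}"

lemma opp_inst: "p \<in> Pairs \<Longrightarrow> opp B c (fst p) (snd p)"
  unfolding Pairs_def
  by (auto simp: opp_def opp_axioms_def pair_def pair_axioms_def gen_axioms)

definition "Idx = Sigma Pairs (\<lambda>p. {P. opp.nrm B (fst p) (snd p) P})"

definition sb :: "('r \<times> 'r) \<times> (int \<times> int) \<Rightarrow> puiseux" where
  "sb x = opp.sfun B c (fst (fst x)) (snd (fst x)) (snd x)"

definition peak :: "('r \<times> 'r) \<times> (int \<times> int) \<Rightarrow> complex \<times> complex" where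
  "peak x = pair.bof B c (fst (fst x)) (snd (fst x)) (snd x)"

definition co :: "puiseux \<Rightarrow> ('r \<times> 'r) \<times> (int \<times> int) \<Rightarrow> complex" where
  "co a x = a (peak x) / GG B c (peak x)"

lemma finite_Pairs: "finite Pairs" by simp

lemma finite_Idx: "finite Idx"
  unfolding Idx_def using opp.finite_nrm[OF opp_inst] by (intro finite_SigmaI) auto

lemma card_Idx: "card Idx = (\<Sum>(i, j)\<in>Pairs. nu (B i) (B j))"
proof -
  have "card Idx = (\<Sum>p\<in>Pairs. card {P. opp.nrm B (fst p) (snd p) P})"
    unfolding Idx_def using opp.finite_nrm[OF opp_inst] by (intro card_SigmaI) auto
  also have "\<dots> = (\<Sum>p\<in>Pairs. nu (B (fst p)) (B (snd p)))"
    using opp.card_nrm[OF opp_inst] by (intro sum.cong) auto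
  also have "\<dots> = (\<Sum>(i, j)\<in>Pairs. nu (B i) (B j))" by (simp add: case_prod_beta)
  finally show ?thesis .
qed

lemma sb_nz_memb:
  assumes x: "x \<in> Idx" and nz: "sb x \<beta> \<noteq> 0"
  shows "opp.memb B c (fst (fst x)) (snd (fst x)) (snd x) \<beta>"
proof -
  have o: "opp B c (fst (fst x)) (snd (fst x))" using x opp_inst by (auto simp: Idx_def)
  show ?thesis using nz unfolding sb_def opp.sfun_def[OF o] by (auto split: if_splits)
qed

lemma sb_unique:
  assumes x: "x \<in> Idx" and y: "y \<in> Idx" and sx: "sb x \<beta> \<noteq> 0" and sy: "sb y \<beta> \<noteq> 0"
  shows "x = y"
proof -
  obtain i j P where xe: "x = ((i, j), P)" by (metis prod.collapse)
  obtain i' j' P' where ye: "y = ((i', j'), P')" by (metis prod.collapse)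
  have p: "(i, j) \<in> Pairs" "opp.nrm B i j P" using x xe by (auto simp: Idx_def)
  have p': "(i', j') \<in> Pairs" "opp.nrm B i' j' P'" using y ye by (auto simp: Idx_def)
  have o: "opp B c i j" "opp B c i' j'" using opp_inst[OF p(1)] opp_inst[OF p'(1)] by auto
  have m: "opp.memb B c i j P \<beta>" using sb_nz_memb[OF x sx] xe by simp
  have m': "opp.memb B c i' j' P' \<beta>" using sb_nz_memb[OF y sy] ye by simp
  have ti: "t i \<beta> \<in> \<int>" "t j \<beta> \<in> \<int>" using opp.memb_t[OF o(1) m] by auto
  have ti': "t i' \<beta> \<in> \<int>" "t j' \<beta> \<in> \<int>" using opp.memb_t[OF o(2) m'] by auto
  have ij: "i < j" "i' < j'" using p(1) p'(1) by (auto simp: Pairs_def)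
  have "i' = i \<or> i' = j" "j' = i \<or> j' = j" using at_most_two[of i j \<beta>] ti ti' ij by auto
  then have "i' = i" "j' = j" using ij by auto
  then have "P = P'" using opp.memb_unique[OF o(1) m] m' p(2) p'(2) by simp
  then show ?thesis using xe ye \<open>i' = i\<close> \<open>j' = j\<close> by simp
qed

lemma sb_peak:
  assumes x: "x \<in> Idx"
  shows "sb x (peak x) = GG B c (peak x)" "GG B c (peak x) \<noteq> 0"
proof -
  have o: "opp B c (fst (fst x)) (snd (fst x))" using x opp_inst by (auto simp: Idx_def)
  have n: "opp.nrm B (fst (fst x)) (snd (fst x)) (snd x)" using x by (auto simp: Idx_def)
  show "sb x (peak x) = GG B c (peak x)" using opp.sfun_peak[OF o n] by (simp add: sb_def peak_def)
  show "GG B c (peak x) \<noteq> 0" using opp.G_peak_nz[OF o n] by (simp add: peak_def)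
qed

lemma sb_sol: "x \<in> Idx \<Longrightarrow> sol (sb x)"
  using opp.sfun_sol[OF opp_inst] by (auto simp: Idx_def sb_def)

lemma sb_value:
  assumes s: "sol a" and x: "x \<in> Idx" and nz: "sb x \<beta> \<noteq> 0"
  shows "co a x * sb x \<beta> = a \<beta>"
proof -
  have o: "opp B c (fst (fst x)) (snd (fst x))" using x opp_inst by (auto simp: Idx_def)
  have n: "opp.nrm B (fst (fst x)) (snd (fst x)) (snd x)" using x by (auto simp: Idx_def)
  have m: "opp.memb B c (fst (fst x)) (snd (fst x)) (snd x) \<beta>" using sb_nz_memb[OF x nz] .
  have "sb x \<beta> = GG B c \<beta>" using m by (simp add: sb_def opp.sfun_def[OF o])
  then show ?thesis using opp.memb_value[OF o s n m] by (simp add: co_def peak_def)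
qed

lemma sb_exists:
  assumes s: "sol a" and nz: "a \<beta> \<noteq> 0"
  shows "\<exists>x\<in>Idx. sb x \<beta> \<noteq> 0"
proof -
  obtain i j where ij: "i < j" "det2 (B i) (B j) \<noteq> 0" "opposite_open_quadrants (B i) (B j)"
    "t i \<beta> \<in> \<int>" "t j \<beta> \<in> \<int>" using support_pair[OF s nz] by blast
  have p: "(i, j) \<in> Pairs" using ij by (simp add: Pairs_def)
  have o: "opp B c i j" using opp_inst[OF p] by simp
  obtain z where z: "\<beta> = pair.bof B c i j z" using pair.bof_surj[OF opp.axioms(1)[OF o] ij(4,5)] by blast
  obtain P where P: "opp.nrm B i j P" "opp.memb B c i j P \<beta>"
    using opp.span_exists[OF o s] nz z by blast
  have "((i, j), P) \<in> Idx" using p P by (simp add: Idx_def)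
  moreover have "sb ((i, j), P) \<beta> \<noteq> 0"
  proof -
    obtain z' where z': "Nn z'" "\<beta> = pair.bof B c i j z'" using P(2) by (auto simp: opp.memb_def[OF o])
    have "GG B c \<beta> \<noteq> 0" using pair.G_nz[OF opp.axioms(1)[OF o]] z' by (auto simp: Nn_def)
    then show ?thesis using P(2) by (simp add: sb_def opp.sfun_def[OF o])
  qed
  ultimately show ?thesis by blast
qed

lemma sol_expand:
  assumes s: "sol a"
  shows "a = (\<Sum>x\<in>Idx. cscale (co a x) (sb x))"
proof
  fix \<beta>
  have "(\<Sum>x\<in>Idx. cscale (co a x) (sb x)) \<beta> = (\<Sum>x\<in>Idx. co a x * sb x \<beta>)"
    by (simp add: sum_fun_app cscale_def)
  also have "\<dots> = a \<beta>"
  proof (cases "\<exists>x\<in>Idx. sb x \<beta> \<noteq> 0")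
    case True
    then obtain x where x: "x \<in> Idx" "sb x \<beta> \<noteq> 0" by blast
    have "(\<Sum>y\<in>Idx. co a y * sb y \<beta>) = co a x * sb x \<beta>"
    proof (rule sum_single'[OF finite_Idx x(1)])
      fix y assume y: "y \<in> Idx" "y \<noteq> x"
      show "co a y * sb y \<beta> = 0"
      proof (rule ccontr)
        assume "co a y * sb y \<beta> \<noteq> 0"
        then have "sb y \<beta> \<noteq> 0" by simp
        then have "y = x" using sb_unique[OF y(1) x(1) _ x(2)] by blast
        then show False using y(2) by simp
      qed
    qed
    then show ?thesis using sb_value[OF s x] by simp
  next
    case False
    then have "a \<beta> = 0" using sb_exists[OF s] by blast
    then show ?thesis using False by simp
  qed
  finally show "a \<beta> = (\<Sum>x\<in>Idx. cscale (co a x) (sb x)) \<beta>" by simp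
qed

lemma sols_eq_span: "horn_puiseux_solutions B c = pv.span (sb ` Idx)"
proof
  show "pv.span (sb ` Idx) \<subseteq> horn_puiseux_solutions B c"
    by (rule pv.span_minimal) (use sb_sol subspace_sols in \<open>auto simp: sol_def\<close>)
next
  show "horn_puiseux_solutions B c \<subseteq> pv.span (sb ` Idx)"
  proof
    fix a assume "a \<in> horn_puiseux_solutions B c"
    then have s: "sol a" by (simp add: sol_def)
    have "(\<Sum>x\<in>Idx. cscale (co a x) (sb x)) \<in> pv.span (sb ` Idx)"
      by (intro pv.span_sum pv.span_scale pv.span_base) auto
    then show "a \<in> pv.span (sb ` Idx)" using sol_expand[OF s] by simp
  qed
qed

lemma inj_sb: "inj_on sb Idx"
proof (rule inj_onI)
  fix x y assume x: "x \<in> Idx" and y: "y \<in> Idx" and e: "sb x = sb y"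
  have "sb x (peak x) \<noteq> 0" using sb_peak[OF x] by simp
  then have "sb y (peak x) \<noteq> 0" using e by simp
  then show "x = y" using sb_unique[OF x y] \<open>sb x (peak x) \<noteq> 0\<close> by blast
qed

lemma indep_sb: "pv.independent (sb ` Idx)"
proof (rule pv.independent_if_scalars_zero)
  show "finite (sb ` Idx)" using finite_Idx by simp
next
  fix f and v assume sum0: "(\<Sum>v\<in>sb ` Idx. cscale (f v) v) = 0" and v: "v \<in> sb ` Idx"
  obtain x where x: "x \<in> Idx" "v = sb x" using v by blast
  have "(\<Sum>u\<in>sb ` Idx. cscale (f u) u) (peak x) = 0" using sum0 by simp
  then have "(\<Sum>u\<in>sb ` Idx. f u * u (peak x)) = 0" by (simp add: sum_fun_app cscale_def)
  moreover have "(\<Sum>u\<in>sb ` Idx. f u * u (peak x)) = f v * v (peak x)"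
  proof (rule sum_single'[OF _ v])
    show "finite (sb ` Idx)" using finite_Idx by simp
  next
    fix u assume u: "u \<in> sb ` Idx" "u \<noteq> v"
    then obtain y where y: "y \<in> Idx" "u = sb y" by blast
    have "sb y (peak x) = 0"
    proof (rule ccontr)
      assume "sb y (peak x) \<noteq> 0"
      then have "y = x" using sb_unique[OF y(1) x(1)] sb_peak[OF x(1)] by auto
      then show False using u y x by simp
    qed
    then show "f u * u (peak x) = 0" using y by simp
  qed
  ultimately have "f v * v (peak x) = 0" by simp
  moreover have "v (peak x) \<noteq> 0" using sb_peak[OF x(1)] x(2) by simp
  ultimately show "f v = 0" by simp
qed

lemma main_gen:
  "rank_p_finite B c \<and> rank_p B c = (\<Sum>(i, j)\<in>Pairs. nu (B i) (B j))"
proof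
  show "rank_p_finite B c"
    unfolding rank_p_finite_def using sols_eq_span finite_Idx by blast
  have "rank_p B c = pv.dim (pv.span (sb ` Idx))" by (simp add: rank_p_def sols_eq_span)
  also have "\<dots> = card (sb ` Idx)" by (rule pv.dim_span_eq_card_independent[OF indep_sb])
  also have "\<dots> = card Idx" using inj_sb by (simp add: card_image)
  finally show "rank_p B c = (\<Sum>(i, j)\<in>Pairs. nu (B i) (B j))" using card_Idx by simp
qed

end

theorem theorem6p6:
  fixes B :: "'n::{finite,linorder} \<Rightarrow> int \<times> int"
  assumes n_gt_2: "CARD('n) > 2"
    and rank2: "\<exists>i j. det2 (B i) (B j) \<noteq> 0"
    and rows_sum_zero: "(\<Sum>j\<in>UNIV. B j) = (0, 0)"
  shows "\<exists>E :: (complex ^ ('n::{finite,linorder})) set. E \<in> null_sets lebesgue \<and>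
           (\<forall>c. c \<notin> E \<longrightarrow>
              rank_p_finite B c \<and>
              rank_p B c = (\<Sum>(i, j)\<in>{(i, j). i < j \<and> det2 (B i) (B j) \<noteq> 0
                                      \<and> opposite_open_quadrants (B i) (B j)}.
                              nu (B i) (B j)))"
proof -
  have *: "\<forall>c :: complex ^ ('n::{finite,linorder}). c \<notin> bad_set \<longrightarrow>
              rank_p_finite B c \<and>
              rank_p B c = (\<Sum>(i, j)\<in>{(i, j). i < j \<and> det2 (B i) (B j) \<noteq> 0
                                      \<and> opposite_open_quadrants (B i) (B j)}.
                              nu (B i) (B j))"
  proof (intro allI impI)
    fix c :: "complex ^ ('n::{finite,linorder})"
    assume "c \<notin> bad_set"
    then have g: "gen c"
      unfolding gen_def bad_set_def by blast
    show "rank_p_finite B c \<and>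
              rank_p B c = (\<Sum>(i, j)\<in>{(i, j). i < j \<and> det2 (B i) (B j) \<noteq> 0
                                      \<and> opposite_open_quadrants (B i) (B j)}.
                              nu (B i) (B j))"
      using gen.main_gen[OF g] by (simp add: gen.Pairs_def[OF g])
  qed
  show ?thesis using * bad_set_null by blast
qed


end
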